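(* Let $f\in H$ be time-independent. Then the functional $\mathcal L(z)=E(z)-2\langle u,f\rangle$, $z=(u,v)\in\mathcal H$, is a Lyapunov functional for $S(t)$, namely $\mathcal L\in C(\mathcal H,\mathbb R)$ and: (i) $\mathcal L(z)\to\infty$ if and only if $\|z\|_{\mathcal H}\to\infty$; (ii) $t\mapsto\mathcal L(S(t)z)$ is nonincreasing for every $z\in\mathcal H$, and in fact $\frac{d}{dt}\mathcal L(S(t)z)=-2\|\partial_t u(t)\|^2$; (iii) if $\mathcal L(S(t)z)=\mathcal L(z)$ for all $t>0$, then $z\in\mathcal S$.
   Context: $H=L^2(\Omega,\mu)$ is a real Hilbert space of (classes of) real functions, with inner product $\langle\cdot,\cdot\rangle$ and norm $\|\cdot\|$; $u^+=\max(u,0)$ pointwise. $A$ is a strictly positive selfadjoint operator on $H$ with compact inverse, first eigenvalue $\lambda_1>0$; $H^r=\mathcal D(A^{r/4})$, $\|u\|_r=\|A^{r/4}u\|$; $\mathcal H=H^2\times H$ with $\|(u,v)\|_{\mathcal H}^2=\|u\|_2^2+\|v\|^2$. Fixed $p,k\in\mathbb R$. $S(t)z=(u(t),\partial_tu(t))$ is the semigroup on $\mathcal H$ given by the weak solution of $\partial_{tt}u+Au+\partial_t u-(p-\|u\|_1^2)A^{1/2}u+k^2u^+=f$, $(u(0),\partial_tu(0))=z$. $E(z)=\|u\|_2^2+\|v\|^2+\tfrac12(\|u\|_1^2-p)^2+k^2\|u^+\|^2$ for $z=(u,v)$. $\mathcal S$ is the set of stationary points $(u,0)$ of $S(t)$,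 i.e. $u$ weakly solves $Au-(p-\|u\|_1^2)A^{1/2}u+k^2u^+=f$. *)

theory Defs
  imports "HOL-Analysis.Analysis"
begin

text \<open>Elements of H = L^2(Omega,mu) are represented by real functions on the
  points of the measure space M; all notions below only depend on the a.e.-class.\<close>

definition L2 :: "'w measure \<Rightarrow> ('w \<Rightarrow> real) set" where
  "L2 M = {u. u \<in> borel_measurable M \<and> integrable M (\<lambda>x. (u x)\<^sup>2)}"

definition ip :: "'w measure \<Rightarrow> ('w \<Rightarrow> real) \<Rightarrow> ('w \<Rightarrow> real) \<Rightarrow> real" where
  "ip M u v = integral\<^sup>L M (\<lambda>x. u x * v x)"

definition nrm :: "'w measure \<Rightarrow> ('w \<Rightarrow> real) \<Rightarrow> real" where
  "nrm M u = sqrt (ip M u u)"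

definition pospart :: "('w \<Rightarrow> real) \<Rightarrow> ('w \<Rightarrow> real)" where
  "pospart u = (\<lambda>x. max (u x) 0)"

text \<open>Spectral data of A: an orthonormal basis (e i), i in I, of H consisting of
  eigenvectors, A e_i = lam i * e_i.  A is strictly positive selfadjoint with compact
  inverse iff lam i > 0 and every sublevel set {i. lam i <= c} is finite.\<close>

definition spectral_setting ::
  "'w measure \<Rightarrow> nat set \<Rightarrow> (nat \<Rightarrow> 'w \<Rightarrow> real) \<Rightarrow> (nat \<Rightarrow> real) \<Rightarrow> bool" where
  "spectral_setting M I e lam \<longleftrightarrow>
     (\<forall>i\<in>I. e i \<in> L2 M) \<and>
     (\<forall>i\<in>I. \<forall>j\<in>I. ip M (e i) (e j) = (if i = j then 1 else 0)) \<and>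
     (\<forall>u\<in>L2 M. ((\<lambda>i. (ip M u (e i))\<^sup>2) has_sum (nrm M u)\<^sup>2) I) \<and>
     (\<forall>i\<in>I. lam i > 0) \<and>
     (\<forall>c. finite {i\<in>I. lam i \<le> c})"

definition coef :: "'w measure \<Rightarrow> (nat \<Rightarrow> 'w \<Rightarrow> real) \<Rightarrow> ('w \<Rightarrow> real) \<Rightarrow> nat \<Rightarrow> real" where
  "coef M e u i = ip M u (e i)"

text \<open>H^r = D(A^(r/4)) and ||u||_r = ||A^(r/4) u||.\<close>

definition Hr :: "'w measure \<Rightarrow> nat set \<Rightarrow> (nat \<Rightarrow> 'w \<Rightarrow> real) \<Rightarrow> (nat \<Rightarrow> real) \<Rightarrow> real
    \<Rightarrow> ('w \<Rightarrow> real) set" where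
  "Hr M I e lam r = {u \<in> L2 M. (\<lambda>i. lam i powr (r/2) * (coef M e u i)\<^sup>2) summable_on I}"

definition nrm_r :: "'w measure \<Rightarrow> nat set \<Rightarrow> (nat \<Rightarrow> 'w \<Rightarrow> real) \<Rightarrow> (nat \<Rightarrow> real) \<Rightarrow> real
    \<Rightarrow> ('w \<Rightarrow> real) \<Rightarrow> real" where
  "nrm_r M I e lam r u = sqrt (infsum (\<lambda>i. lam i powr (r/2) * (coef M e u i)\<^sup>2) I)"

definition phase :: "'w measure \<Rightarrow> nat set \<Rightarrow> (nat \<Rightarrow> 'w \<Rightarrow> real) \<Rightarrow> (nat \<Rightarrow> real)
    \<Rightarrow> (('w \<Rightarrow> real) \<times> ('w \<Rightarrow> real)) set" where
  "phase M I e lam = Hr M I e lam 2 \<times> L2 M"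

definition phase_norm :: "'w measure \<Rightarrow> nat set \<Rightarrow> (nat \<Rightarrow> 'w \<Rightarrow> real) \<Rightarrow> (nat \<Rightarrow> real)
    \<Rightarrow> ('w \<Rightarrow> real) \<times> ('w \<Rightarrow> real) \<Rightarrow> real" where
  "phase_norm M I e lam z = sqrt ((nrm_r M I e lam 2 (fst z))\<^sup>2 + (nrm M (snd z))\<^sup>2)"

text \<open>Weak solution on [0,oo) of
  u_tt + A u + u_t - (p - ||u||_1^2) A^(1/2) u + k^2 u^+ = f,
  with u in C([0,oo),H^2), u_t = v in C([0,oo),H); the equation is tested against the
  eigenbasis (equivalently against all test functions in H^2).\<close>

definition weak_solution ::
  "'w measure \<Rightarrow> nat set \<Rightarrow> (nat \<Rightarrow> 'w \<Rightarrow> real) \<Rightarrow> (nat \<Rightarrow> real) \<Rightarrow> real \<Rightarrow> real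
   \<Rightarrow> ('w \<Rightarrow> real) \<Rightarrow> (real \<Rightarrow> 'w \<Rightarrow> real) \<Rightarrow> (real \<Rightarrow> 'w \<Rightarrow> real) \<Rightarrow> bool" where
  "weak_solution M I e lam p k f u v \<longleftrightarrow>
     (\<forall>t\<ge>0. u t \<in> Hr M I e lam 2 \<and> v t \<in> L2 M) \<and>
     (\<forall>t0\<ge>0. ((\<lambda>t. nrm_r M I e lam 2 (u t - u t0)) \<longlongrightarrow> 0) (at t0 within {0..})) \<and>
     (\<forall>t0\<ge>0. ((\<lambda>t. nrm M (v t - v t0)) \<longlongrightarrow> 0) (at t0 within {0..})) \<and>
     (\<forall>i\<in>I. \<forall>t\<ge>0.
        ((\<lambda>s. coef M e (u s) i) has_real_derivative coef M e (v t) i) (at t within {0..}) \<and>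
        ((\<lambda>s. coef M e (v s) i) has_real_derivative
            (- lam i * coef M e (u t) i - coef M e (v t) i
             + (p - (nrm_r M I e lam 1 (u t))\<^sup>2) * sqrt (lam i) * coef M e (u t) i
             - k\<^sup>2 * coef M e (pospart (u t)) i + coef M e f i)) (at t within {0..}))"

definition energy :: "'w measure \<Rightarrow> nat set \<Rightarrow> (nat \<Rightarrow> 'w \<Rightarrow> real) \<Rightarrow> (nat \<Rightarrow> real) \<Rightarrow> real
    \<Rightarrow> real \<Rightarrow> ('w \<Rightarrow> real) \<times> ('w \<Rightarrow> real) \<Rightarrow> real" where
  "energy M I e lam p k z =
     (nrm_r M I e lam 2 (fst z))\<^sup>2 + (nrm M (snd z))\<^sup>2
     + 1/2 * ((nrm_r M I e lam 1 (fst z))\<^sup>2 - p)\<^sup>2 + k\<^sup>2 * (nrm M (pospart (fst z)))\<^sup>2"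

definition stationary_set :: "'w measure \<Rightarrow> nat set \<Rightarrow> (nat \<Rightarrow> 'w \<Rightarrow> real) \<Rightarrow> (nat \<Rightarrow> real)
    \<Rightarrow> real \<Rightarrow> real \<Rightarrow> ('w \<Rightarrow> real) \<Rightarrow> (('w \<Rightarrow> real) \<times> ('w \<Rightarrow> real)) set" where
  "stationary_set M I e lam p k f =
     {(u, v). u \<in> Hr M I e lam 2 \<and> v \<in> L2 M \<and> (AE x in M. v x = 0) \<and>
        (\<forall>i\<in>I. lam i * coef M e u i
                 - (p - (nrm_r M I e lam 1 u)\<^sup>2) * sqrt (lam i) * coef M e u i
                 + k\<^sup>2 * coef M e (pospart u) i = coef M e f i)}"

definition lyap :: "'w measure \<Rightarrow> nat set \<Rightarrow> (nat \<Rightarrow> 'w \<Rightarrow> real) \<Rightarrow> (nat \<Rightarrow> real) \<Rightarrow> real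
    \<Rightarrow> real \<Rightarrow> ('w \<Rightarrow> real) \<Rightarrow> ('w \<Rightarrow> real) \<times> ('w \<Rightarrow> real) \<Rightarrow> real" where
  "lyap M I e lam p k f z = energy M I e lam p k z - 2 * ip M (fst z) f"

end

theory Submission
  imports Defs "HOL-Analysis.Analysis"
begin


lemma amgm2: fixes a b t :: real assumes "t > 0"
  shows "2 * \<bar>a * b\<bar> \<le> t * a\<^sup>2 + b\<^sup>2 / t"
proof -
  have "0 \<le> (t * \<bar>a\<bar> - \<bar>b\<bar>)\<^sup>2" by simp
  hence "2 * t * \<bar>a * b\<bar> \<le> t * (t * a\<^sup>2) + b\<^sup>2"
    by (simp add: power2_eq_square algebra_simps abs_mult)
  hence "t * (2 * \<bar>a * b\<bar>) \<le> t * (t * a\<^sup>2 + b\<^sup>2 / t)"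
    using assms by (simp add: algebra_simps)
  thus ?thesis using assms by (simp add: mult_le_cancel_left_pos)
qed

lemma cs_abs: fixes x y b :: real
  assumes x: "0 \<le> x" and y: "0 \<le> y" and h: "\<And>t. t > 0 \<Longrightarrow> 2 * \<bar>b\<bar> \<le> t * x + y / t"
  shows "\<bar>b\<bar> \<le> sqrt x * sqrt y"
proof (cases "x > 0 \<and> y > 0")
  case True
  define t where "t = sqrt y / sqrt x"
  have sx: "sqrt x > 0" using True by simp
  have tp: "t > 0" using True by (simp add: t_def)
  have xx: "x = sqrt x * sqrt x" using True by simp
  have yy: "y = sqrt y * sqrt y" using True by simp
  have "t * x = sqrt x * sqrt y" unfolding t_def using sx
    by (subst xx) (simp add: field_simps)
  moreover have "y / t = sqrt x * sqrt y" unfolding t_def using sx True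
    by (subst yy) (simp add: field_simps)
  ultimately show ?thesis using h[OF tp] by simp
next
  case False
  show ?thesis
  proof (rule ccontr)
    assume nb: "\<not> ?thesis"
    hence bp: "\<bar>b\<bar> > 0" by (smt (verit) real_sqrt_ge_zero mult_nonneg_nonneg x y)
    show False
    proof (cases "x = 0")
      case True
      have "(y + 1) / \<bar>b\<bar> > 0" using bp y by simp
      from h[OF this] True have "2 * \<bar>b\<bar> \<le> y / ((y + 1) / \<bar>b\<bar>)" by simp
      also have "\<dots> = y * \<bar>b\<bar> / (y + 1)" using bp y by (simp add: field_simps)
      also have "\<dots> \<le> \<bar>b\<bar>" using bp y by (simp add: divide_le_eq)
      finally show False using bp by simp
    next
      case xne: False
      hence "y = 0" using False x y by auto
      have xp: "x > 0" using xne x by simp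
      have "\<bar>b\<bar> / x > 0" using bp xp by simp
      from h[OF this] \<open>y = 0\<close> have "2 * \<bar>b\<bar> \<le> \<bar>b\<bar> / x * x" by simp
      thus False using xp bp by simp
    qed
  qed
qed

lemma L2D: "u \<in> L2 M \<Longrightarrow> u \<in> borel_measurable M \<and> integrable M (\<lambda>x. (u x)\<^sup>2)"
  by (simp add: L2_def)

lemma L2_int_mult: assumes "u \<in> L2 M" "w \<in> L2 M"
  shows "integrable M (\<lambda>x. u x * w x)"
proof (rule Bochner_Integration.integrable_bound)
  show "integrable M (\<lambda>x. (u x)\<^sup>2 + (w x)\<^sup>2)" using assms by (auto simp: L2_def)
  show "(\<lambda>x. u x * w x) \<in> borel_measurable M" using assms by (auto simp: L2_def)
  show "AE x in M. norm (u x * w x) \<le> norm ((u x)\<^sup>2 + (w x)\<^sup>2)"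
  proof (rule AE_I2)
    fix x
    have "2 * \<bar>u x * w x\<bar> \<le> 1 * (u x)\<^sup>2 + (w x)\<^sup>2 / 1" by (rule amgm2) simp
    thus "norm (u x * w x) \<le> norm ((u x)\<^sup>2 + (w x)\<^sup>2)" by simp
  qed
qed

lemma L2_add: assumes "u \<in> L2 M" "w \<in> L2 M" shows "(\<lambda>x. u x + w x) \<in> L2 M"
proof -
  have "integrable M (\<lambda>x. (u x)\<^sup>2 + (w x)\<^sup>2 + 2 * (u x * w x))"
    using assms L2_int_mult[OF assms] by (auto simp: L2_def)
  moreover have "(\<lambda>x. (u x)\<^sup>2 + (w x)\<^sup>2 + 2 * (u x * w x)) = (\<lambda>x. (u x + w x)\<^sup>2)"
    by (auto simp: power2_eq_square algebra_simps)
  ultimately show ?thesis using assms by (auto simp: L2_def)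
qed

lemma L2_cmult: assumes "u \<in> L2 M" shows "(\<lambda>x. c * u x) \<in> L2 M"
proof -
  have "integrable M (\<lambda>x. c\<^sup>2 * (u x)\<^sup>2)" using assms by (auto simp: L2_def)
  thus ?thesis using assms by (auto simp: L2_def power_mult_distrib)
qed

lemma L2_diff: assumes "u \<in> L2 M" "w \<in> L2 M" shows "(\<lambda>x. u x - w x) \<in> L2 M"
  using L2_add[OF assms(1) L2_cmult[OF assms(2), of "-1"]] by simp

lemma L2_diff': assumes "u \<in> L2 M" "w \<in> L2 M" shows "u - w \<in> L2 M"
  using L2_diff[OF assms] by (simp add: fun_diff_def)

lemma L2_pospart: assumes "u \<in> L2 M" shows "pospart u \<in> L2 M"
proof -
  have m: "pospart u \<in> borel_measurable M" using assms by (auto simp: L2_def pospart_def)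
  have "integrable M (\<lambda>x. (pospart u x)\<^sup>2)"
  proof (rule Bochner_Integration.integrable_bound)
    show "integrable M (\<lambda>x. (u x)\<^sup>2)" using assms by (auto simp: L2_def)
    show "(\<lambda>x. (pospart u x)\<^sup>2) \<in> borel_measurable M" using m by auto
    show "AE x in M. norm ((pospart u x)\<^sup>2) \<le> norm ((u x)\<^sup>2)"
      by (rule AE_I2) (auto simp: pospart_def max_def power2_eq_square)
  qed
  thus ?thesis using m by (simp add: L2_def)
qed

lemma ip_sym: "ip M u w = ip M w u" by (simp add: ip_def mult.commute)

lemma ip_add_left: assumes "u \<in> L2 M" "w \<in> L2 M" "g \<in> L2 M"
  shows "ip M (\<lambda>x. u x + w x) g = ip M u g + ip M w g"
  using L2_int_mult[OF assms(1,3)] L2_int_mult[OF assms(2,3)]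
  by (simp add: ip_def distrib_right)

lemma ip_cmult_left: "ip M (\<lambda>x. c * u x) g = c * ip M u g"
  by (simp add: ip_def mult.assoc)

lemma ip_diff_left: assumes "u \<in> L2 M" "w \<in> L2 M" "g \<in> L2 M"
  shows "ip M (\<lambda>x. u x - w x) g = ip M u g - ip M w g"
  using L2_int_mult[OF assms(1,3)] L2_int_mult[OF assms(2,3)]
  by (simp add: ip_def left_diff_distrib)

lemma ip_diff_left': assumes "u \<in> L2 M" "w \<in> L2 M" "g \<in> L2 M"
  shows "ip M (u - w) g = ip M u g - ip M w g"
  using ip_diff_left[OF assms] by (simp add: fun_diff_def)

lemma ip_self_nonneg: "0 \<le> ip M u u"
  unfolding ip_def by (rule integral_nonneg_AE) simp

lemma nrm_sq: "(nrm M u)\<^sup>2 = ip M u u"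
  unfolding nrm_def using ip_self_nonneg[of M u] by simp

lemma nrm_nonneg: "0 \<le> nrm M u" using ip_self_nonneg[of M u] by (simp add: nrm_def)

lemma ip_amgm: assumes "u \<in> L2 M" "w \<in> L2 M" "t > 0"
  shows "2 * \<bar>ip M u w\<bar> \<le> t * ip M u u + ip M w w / t"
proof -
  have i1: "integrable M (\<lambda>x. u x * w x)" using L2_int_mult[OF assms(1,2)] .
  have i2: "integrable M (\<lambda>x. t * (u x)\<^sup>2 + (w x)\<^sup>2 / t)" using assms by (auto simp: L2_def)
  have "2 * \<bar>ip M u w\<bar> = \<bar>integral\<^sup>L M (\<lambda>x. 2 * (u x * w x))\<bar>" by (simp add: ip_def)
  also have "\<dots> \<le> integral\<^sup>L M (\<lambda>x. \<bar>2 * (u x * w x)\<bar>)"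
    by (rule integral_abs_bound)
  also have "\<dots> \<le> integral\<^sup>L M (\<lambda>x. t * (u x)\<^sup>2 + (w x)\<^sup>2 / t)"
  proof (rule integral_mono)
    show "integrable M (\<lambda>x. \<bar>2 * (u x * w x)\<bar>)" using i1 by auto
    show "integrable M (\<lambda>x. t * (u x)\<^sup>2 + (w x)\<^sup>2 / t)" by (rule i2)
    fix x show "\<bar>2 * (u x * w x)\<bar> \<le> t * (u x)\<^sup>2 + (w x)\<^sup>2 / t"
      using amgm2[OF assms(3), of "u x" "w x"] by (simp add: abs_mult)
  qed
  also have "\<dots> = t * ip M u u + ip M w w / t"
    using assms by (simp add: ip_def L2_def power2_eq_square)
  finally show ?thesis .
qed

lemma ip_cs: assumes "u \<in> L2 M" "w \<in> L2 M"
  shows "\<bar>ip M u w\<bar> \<le> nrm M u * nrm M w"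
  unfolding nrm_def by (rule cs_abs[OF ip_self_nonneg ip_self_nonneg ip_amgm[OF assms]])

lemma nrm_zero_AE: assumes "u \<in> L2 M" "nrm M u = 0" shows "AE x in M. u x = 0"
proof -
  have "ip M u u = 0" using assms(2) nrm_sq[of M u] by simp
  hence "integral\<^sup>L M (\<lambda>x. (u x)\<^sup>2) = 0" by (simp add: ip_def power2_eq_square)
  hence "AE x in M. (u x)\<^sup>2 = 0"
    using integral_nonneg_eq_0_iff_AE[of M "\<lambda>x. (u x)\<^sup>2"] assms(1) by (auto simp: L2_def)
  thus ?thesis by auto
qed

lemma ip_cong_AE: assumes "AE x in M. u x = w x" "u \<in> L2 M" "w \<in> L2 M" "g \<in> L2 M"
  shows "ip M u g = ip M w g"
  unfolding ip_def using assms by (intro integral_cong_AE) (auto simp: L2_def)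


lemma has_sum_diff: fixes f g :: "'a \<Rightarrow> real"
  assumes "(f has_sum a) A" "(g has_sum b) A" shows "((\<lambda>x. f x - g x) has_sum (a - b)) A"
  using has_sum_add[OF assms(1) has_sum_uminusI[OF assms(2)]] by simp

lemma wsum_summable: fixes w x y :: "nat \<Rightarrow> real"
  assumes w: "\<And>i. i \<in> I \<Longrightarrow> 0 \<le> w i"
    and sx: "(\<lambda>i. w i * (x i)\<^sup>2) summable_on I" and sy: "(\<lambda>i. w i * (y i)\<^sup>2) summable_on I"
  shows "(\<lambda>i. w i * x i * y i) summable_on I"
proof -
  have g: "(\<lambda>i. w i * (x i)\<^sup>2 + w i * (y i)\<^sup>2) summable_on I" using summable_on_add[OF sx sy] .
  have b: "norm (w i * x i * y i) \<le> w i * (x i)\<^sup>2 + w i * (y i)\<^sup>2" if i: "i \<in> I" for i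
  proof -
    have "2 * \<bar>x i * y i\<bar> \<le> 1 * (x i)\<^sup>2 + (y i)\<^sup>2 / 1" by (rule amgm2) simp
    hence "w i * \<bar>x i * y i\<bar> \<le> w i * ((x i)\<^sup>2 + (y i)\<^sup>2)"
      using w[OF i] by (intro mult_left_mono) auto
    thus ?thesis using w[OF i] by (simp add: abs_mult algebra_simps)
  qed
  have "(\<lambda>i. norm (w i * x i * y i)) summable_on I"
    using summable_on_comparison_test[OF g] b by simp
  thus ?thesis using summable_on_iff_abs_summable_on_real by blast
qed

lemma norm_infsum_le: fixes f :: "nat \<Rightarrow> real" assumes "f summable_on I"
  shows "\<bar>infsum f I\<bar> \<le> infsum (\<lambda>i. \<bar>f i\<bar>) I"
proof -
  have "Infinite_Sum.abs_summable_on f I" using assms summable_on_iff_abs_summable_on_real by blast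
  from norm_infsum_bound[OF this] show ?thesis by simp
qed

lemma wsum_amgm: fixes w x y :: "nat \<Rightarrow> real"
  assumes w: "\<And>i. i \<in> I \<Longrightarrow> 0 \<le> w i"
    and sx: "(\<lambda>i. w i * (x i)\<^sup>2) summable_on I" and sy: "(\<lambda>i. w i * (y i)\<^sup>2) summable_on I"
    and t: "t > 0"
  shows "2 * \<bar>infsum (\<lambda>i. w i * x i * y i) I\<bar> \<le> t * infsum (\<lambda>i. w i * (x i)\<^sup>2) I + infsum (\<lambda>i. w i * (y i)\<^sup>2) I / t"
proof -
  have s: "(\<lambda>i. w i * x i * y i) summable_on I" by (rule wsum_summable[OF w sx sy])
  have sa0: "(\<lambda>i. norm (w i * x i * y i)) summable_on I"
    using summable_on_iff_abs_summable_on_real[THEN iffD1, OF s] .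
  hence sa: "(\<lambda>i. \<bar>w i * x i * y i\<bar>) summable_on I" by simp
  have s2: "(\<lambda>i. t * (w i * (x i)\<^sup>2) + (1/t) * (w i * (y i)\<^sup>2)) summable_on I"
    using summable_on_add[OF summable_on_cmult_right[OF sx, of t] summable_on_cmult_right[OF sy, of "1/t"]] .
  have s3: "(\<lambda>i. 2 * \<bar>w i * x i * y i\<bar>) summable_on I"
    using summable_on_cmult_right[OF sa, of 2] .
  have pw: "2 * \<bar>w i * x i * y i\<bar> \<le> t * (w i * (x i)\<^sup>2) + (1/t) * (w i * (y i)\<^sup>2)" if i: "i \<in> I" for i
  proof -
    have "w i * (2 * \<bar>x i * y i\<bar>) \<le> w i * (t * (x i)\<^sup>2 + (y i)\<^sup>2 / t)"
      using amgm2[OF t, of "x i" "y i"] w[OF i] by (rule mult_left_mono)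
    thus ?thesis using w[OF i] by (simp add: abs_mult algebra_simps)
  qed
  have "2 * \<bar>infsum (\<lambda>i. w i * x i * y i) I\<bar> \<le> 2 * infsum (\<lambda>i. \<bar>w i * x i * y i\<bar>) I"
    using norm_infsum_le[OF s] by simp
  also have "\<dots> = infsum (\<lambda>i. 2 * \<bar>w i * x i * y i\<bar>) I"
    using infsum_cmult_right'[of 2 "\<lambda>i. \<bar>w i * x i * y i\<bar>" I] by simp
  also have "\<dots> \<le> infsum (\<lambda>i. t * (w i * (x i)\<^sup>2) + (1/t) * (w i * (y i)\<^sup>2)) I"
    using infsum_mono[OF s3 s2] pw by blast
  also have "\<dots> = t * infsum (\<lambda>i. w i * (x i)\<^sup>2) I + (1/t) * infsum (\<lambda>i. w i * (y i)\<^sup>2) I"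
    using infsum_add[OF summable_on_cmult_right[OF sx, of t] summable_on_cmult_right[OF sy, of "1/t"]]
      infsum_cmult_right'[of t "\<lambda>i. w i * (x i)\<^sup>2" I] infsum_cmult_right'[of "1/t" "\<lambda>i. w i * (y i)\<^sup>2" I]
    by simp
  finally show ?thesis by simp
qed

lemma wsum_cs: fixes w x y :: "nat \<Rightarrow> real"
  assumes w: "\<And>i. i \<in> I \<Longrightarrow> 0 \<le> w i"
    and sx: "(\<lambda>i. w i * (x i)\<^sup>2) summable_on I" and sy: "(\<lambda>i. w i * (y i)\<^sup>2) summable_on I"
  shows "\<bar>infsum (\<lambda>i. w i * x i * y i) I\<bar> \<le> sqrt (infsum (\<lambda>i. w i * (x i)\<^sup>2) I) * sqrt (infsum (\<lambda>i. w i * (y i)\<^sup>2) I)"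
proof -
  have a: "0 \<le> infsum (\<lambda>i. w i * (x i)\<^sup>2) I" using w by (intro infsum_nonneg) simp
  have b: "0 \<le> infsum (\<lambda>i. w i * (y i)\<^sup>2) I" using w by (intro infsum_nonneg) simp
  show ?thesis using cs_abs[OF a b wsum_amgm[OF w sx sy]] by simp
qed

locale sset =
  fixes M :: "'w measure" and I :: "nat set" and e :: "nat \<Rightarrow> 'w \<Rightarrow> real" and lam :: "nat \<Rightarrow> real"
  assumes spec: "spectral_setting M I e lam"
begin

lemma e_L2: "i \<in> I \<Longrightarrow> e i \<in> L2 M" using spec by (simp add: spectral_setting_def)

lemma lam_pos: "i \<in> I \<Longrightarrow> lam i > 0" using spec by (simp add: spectral_setting_def)

lemma lam_min: "\<exists>m>0. \<forall>i\<in>I. m \<le> lam i"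
proof (cases "I = {}")
  case True thus ?thesis by (intro exI[of _ 1]) auto
next
  case False
  then obtain i0 where i0: "i0 \<in> I" by auto
  define J where "J = {i\<in>I. lam i \<le> lam i0}"
  have fJ: "finite J" using spec unfolding J_def spectral_setting_def by blast
  have i0J: "i0 \<in> J" using i0 by (simp add: J_def)
  define m where "m = Min (lam ` J)"
  have "m \<in> lam ` J" unfolding m_def using fJ i0J by (intro Min_in) auto
  hence mp: "m > 0" using lam_pos by (auto simp: J_def)
  have "\<forall>i\<in>I. m \<le> lam i"
  proof
    fix i assume i: "i \<in> I"
    show "m \<le> lam i"
    proof (cases "lam i \<le> lam i0")
      case True thus ?thesis using fJ i unfolding m_def by (intro Min_le) (auto simp: J_def)
    next
      case False
      have "m \<le> lam i0" using fJ i0J unfolding m_def by (intro Min_le) auto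
      thus ?thesis using False by simp
    qed
  qed
  thus ?thesis using mp by blast
qed

lemma pars: assumes u: "u \<in> L2 M" shows "((\<lambda>i. (coef M e u i)\<^sup>2) has_sum ip M u u) I"
proof -
  have "((\<lambda>i. (ip M u (e i))\<^sup>2) has_sum (nrm M u)\<^sup>2) I" using spec u by (simp add: spectral_setting_def)
  thus ?thesis by (simp add: nrm_sq coef_def)
qed

lemma coef_add: "u \<in> L2 M \<Longrightarrow> w \<in> L2 M \<Longrightarrow> i \<in> I \<Longrightarrow>
   coef M e (\<lambda>x. u x + w x) i = coef M e u i + coef M e w i"
  by (simp add: coef_def ip_add_left e_L2)

lemma coef_diff: "u \<in> L2 M \<Longrightarrow> w \<in> L2 M \<Longrightarrow> i \<in> I \<Longrightarrow>
   coef M e (\<lambda>x. u x - w x) i = coef M e u i - coef M e w i"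
  by (simp add: coef_def ip_diff_left e_L2)

lemma coef_diff': "u \<in> L2 M \<Longrightarrow> w \<in> L2 M \<Longrightarrow> i \<in> I \<Longrightarrow>
   coef M e (u - w) i = coef M e u i - coef M e w i"
  using coef_diff by (simp add: fun_diff_def)

lemma coef_cong_AE: "AE x in M. u x = w x \<Longrightarrow> u \<in> L2 M \<Longrightarrow> w \<in> L2 M \<Longrightarrow> i \<in> I \<Longrightarrow>
   coef M e u i = coef M e w i"
  unfolding coef_def by (rule ip_cong_AE) (auto simp: e_L2)

lemma pars_ip: assumes u: "u \<in> L2 M" and w: "w \<in> L2 M"
  shows "((\<lambda>i. coef M e u i * coef M e w i) has_sum ip M u w) I"
proof -
  define a where "a = (\<lambda>x. u x + w x)"
  define b where "b = (\<lambda>x. u x - w x)"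
  have aL: "a \<in> L2 M" unfolding a_def using L2_add u w .
  have bL: "b \<in> L2 M" unfolding b_def using L2_diff u w .
  have eq1: "(coef M e a i)\<^sup>2 = (coef M e u i + coef M e w i)\<^sup>2" if "i \<in> I" for i
    unfolding a_def using coef_add[OF u w that] by simp
  have eq2: "(coef M e b i)\<^sup>2 = (coef M e u i - coef M e w i)\<^sup>2" if "i \<in> I" for i
    unfolding b_def using coef_diff[OF u w that] by simp
  have h1: "((\<lambda>i. (coef M e u i + coef M e w i)\<^sup>2) has_sum ip M a a) I"
    using has_sum_cong[of I "\<lambda>i. (coef M e a i)\<^sup>2" "\<lambda>i. (coef M e u i + coef M e w i)\<^sup>2", THEN iffD1, OF eq1 pars[OF aL]] .
  have h2: "((\<lambda>i. (coef M e u i - coef M e w i)\<^sup>2) has_sum ip M b b) I"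
    using has_sum_cong[of I "\<lambda>i. (coef M e b i)\<^sup>2" "\<lambda>i. (coef M e u i - coef M e w i)\<^sup>2", THEN iffD1, OF eq2 pars[OF bL]] .
  have h3: "((\<lambda>i. (1/4) * ((coef M e u i + coef M e w i)\<^sup>2 - (coef M e u i - coef M e w i)\<^sup>2)) has_sum
      (1/4) * (ip M a a - ip M b b)) I"
    using has_sum_cmult_right[OF has_sum_diff[OF h1 h2]] .
  have ia: "ip M a a = ip M u u + 2 * ip M u w + ip M w w"
  proof -
    have "ip M a a = ip M u a + ip M w a" unfolding a_def using ip_add_left[OF u w aL] unfolding a_def .
    also have "ip M u a = ip M u u + ip M u w"
      using ip_add_left[OF u w u] ip_sym[of M u a] ip_sym[of M w u] unfolding a_def by simp
    also have "ip M w a = ip M u w + ip M w w"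
      using ip_add_left[OF u w w] ip_sym[of M w a] unfolding a_def by simp
    finally show ?thesis by simp
  qed
  have ib: "ip M b b = ip M u u - 2 * ip M u w + ip M w w"
  proof -
    have "ip M b b = ip M u b - ip M w b" unfolding b_def using ip_diff_left[OF u w bL] unfolding b_def .
    also have "ip M u b = ip M u u - ip M u w"
      using ip_diff_left[OF u w u] ip_sym[of M u b] ip_sym[of M w u] unfolding b_def by simp
    also have "ip M w b = ip M u w - ip M w w"
      using ip_diff_left[OF u w w] ip_sym[of M w b] unfolding b_def by simp
    finally show ?thesis by simp
  qed
  have e1: "(1/4) * (ip M a a - ip M b b) = ip M u w" using ia ib by simp
  have e2: "(1/4) * ((coef M e u i + coef M e w i)\<^sup>2 - (coef M e u i - coef M e w i)\<^sup>2) = coef M e u i * coef M e w i" for i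
    by (simp add: power2_eq_square algebra_simps)
  show ?thesis using h3 unfolding e1 e2 .
qed

lemma coef_zero_AE: assumes u: "u \<in> L2 M" and z: "\<And>i. i \<in> I \<Longrightarrow> coef M e u i = 0"
  shows "AE x in M. u x = 0"
proof -
  have "((\<lambda>i. (coef M e u i)\<^sup>2) has_sum 0) I"
    by (subst has_sum_cong[where g = "\<lambda>_. 0"]) (simp_all add: z)
  hence "ip M u u = 0" using pars[OF u] has_sum_unique by blast
  hence "nrm M u = 0" by (simp add: nrm_def)
  thus ?thesis by (rule nrm_zero_AE[OF u])
qed

lemma coef_sq_le: assumes u: "u \<in> L2 M" and i: "i \<in> I"
  shows "(coef M e u i)\<^sup>2 \<le> ip M u u"
  using finite_sum_le_has_sum[OF pars[OF u], of "{i}"] i by simp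

end


definition utail :: "nat set \<Rightarrow> real set \<Rightarrow> (nat \<Rightarrow> real \<Rightarrow> real) \<Rightarrow> bool" where
  "utail I K a \<longleftrightarrow> (\<forall>\<epsilon>>0. \<exists>N. \<forall>\<tau>\<in>K. \<forall>F. finite F \<and> F \<subseteq> I \<and> (\<forall>i\<in>F. N \<le> i) \<longrightarrow> \<bar>\<Sum>i\<in>F. a i \<tau>\<bar> \<le> \<epsilon>)"

definition ubnd :: "nat set \<Rightarrow> real set \<Rightarrow> (nat \<Rightarrow> real \<Rightarrow> real) \<Rightarrow> bool" where
  "ubnd I K a \<longleftrightarrow> (\<exists>B. \<forall>\<tau>\<in>K. \<forall>F. finite F \<and> F \<subseteq> I \<longrightarrow> (\<Sum>i\<in>F. a i \<tau>) \<le> B)"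

lemma tails_small: fixes g :: "nat \<Rightarrow> real"
  assumes hs: "(g has_sum S) I" and nn: "\<And>i. i \<in> I \<Longrightarrow> 0 \<le> g i" and ep: "\<epsilon> > 0"
  shows "\<exists>N. \<forall>F. finite F \<and> F \<subseteq> I \<and> (\<forall>i\<in>F. N \<le> i) \<longrightarrow> sum g F < \<epsilon>"
proof -
  obtain F0 where F0: "finite F0" "F0 \<subseteq> I" "dist (sum g F0) S \<le> \<epsilon>/2"
    using has_sum_finite_approximation[OF hs, of "\<epsilon>/2"] ep by auto
  define N where "N = Suc (Max (insert 0 F0))"
  have lt: "i < N" if "i \<in> F0" for i
    using F0(1) that unfolding N_def by (simp add: le_imp_less_Suc)
  show ?thesis
  proof (intro exI[of _ N] allI impI)
    fix F assume F: "finite F \<and> F \<subseteq> I \<and> (\<forall>i\<in>F. N \<le> i)"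
    have disj: "F0 \<inter> F = {}" using lt F by force
    have "sum g (F0 \<union> F) \<le> S"
      by (rule finite_sum_le_has_sum[OF hs]) (use F F0 nn in auto)
    moreover have "sum g (F0 \<union> F) = sum g F0 + sum g F"
      using F F0 disj by (simp add: sum.union_disjoint)
    ultimately have "sum g F \<le> S - sum g F0" by simp
    also have "\<dots> \<le> \<epsilon>/2" using F0(3) unfolding dist_real_def by linarith
    finally show "sum g F < \<epsilon>" using ep by simp
  qed
qed

lemma sqrt_sum_tri: fixes a b :: "nat \<Rightarrow> real"
  shows "sqrt (\<Sum>i\<in>F. (a i)\<^sup>2) \<le> sqrt (\<Sum>i\<in>F. (b i)\<^sup>2) + sqrt (\<Sum>i\<in>F. (a i - b i)\<^sup>2)"
  using L2_set_triangle_ineq[of b "\<lambda>i. a i - b i" F] by (simp add: L2_set_def)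

lemma utail_cont:
  fixes x :: "nat \<Rightarrow> real \<Rightarrow> real"
  assumes K: "compact K"
    and summ: "\<And>\<tau>. \<tau> \<in> K \<Longrightarrow> (\<lambda>i. (x i \<tau>)\<^sup>2) summable_on I"
    and cont: "\<And>\<tau>0 \<epsilon>. \<tau>0 \<in> K \<Longrightarrow> \<epsilon> > 0 \<Longrightarrow> \<exists>\<delta>>0. \<forall>\<tau>\<in>K. dist \<tau> \<tau>0 < \<delta> \<longrightarrow>
        (\<forall>F. finite F \<and> F \<subseteq> I \<longrightarrow> (\<Sum>i\<in>F. (x i \<tau> - x i \<tau>0)\<^sup>2) \<le> \<epsilon>)"
  shows "utail I K (\<lambda>i \<tau>. (x i \<tau>)\<^sup>2) \<and> ubnd I K (\<lambda>i \<tau>. (x i \<tau>)\<^sup>2)"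
proof
  show "utail I K (\<lambda>i \<tau>. (x i \<tau>)\<^sup>2)"
    unfolding utail_def
  proof (intro allI impI)
    fix \<epsilon> :: real assume ep: "\<epsilon> > 0"
    define \<eta> where "\<eta> = sqrt \<epsilon> / 2"
    have eta: "\<eta> > 0" using ep by (simp add: \<eta>_def)
    have "\<forall>\<tau>0\<in>K. \<exists>\<delta>>0. \<forall>\<tau>\<in>K. dist \<tau> \<tau>0 < \<delta> \<longrightarrow>
        (\<forall>F. finite F \<and> F \<subseteq> I \<longrightarrow> (\<Sum>i\<in>F. (x i \<tau> - x i \<tau>0)\<^sup>2) \<le> \<eta>\<^sup>2)"
      using cont eta by simp
    then obtain d where d: "\<And>\<tau>0. \<tau>0 \<in> K \<Longrightarrow> d \<tau>0 > 0 \<and> (\<forall>\<tau>\<in>K. dist \<tau> \<tau>0 < d \<tau>0 \<longrightarrow>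
        (\<forall>F. finite F \<and> F \<subseteq> I \<longrightarrow> (\<Sum>i\<in>F. (x i \<tau> - x i \<tau>0)\<^sup>2) \<le> \<eta>\<^sup>2))"
      by metis
    have "\<forall>\<tau>0\<in>K. \<exists>N. \<forall>F. finite F \<and> F \<subseteq> I \<and> (\<forall>i\<in>F. N \<le> i) \<longrightarrow> (\<Sum>i\<in>F. (x i \<tau>0)\<^sup>2) < \<eta>\<^sup>2"
    proof
      fix \<tau>0 assume "\<tau>0 \<in> K"
      show "\<exists>N. \<forall>F. finite F \<and> F \<subseteq> I \<and> (\<forall>i\<in>F. N \<le> i) \<longrightarrow> (\<Sum>i\<in>F. (x i \<tau>0)\<^sup>2) < \<eta>\<^sup>2"
        by (rule tails_small[OF has_sum_infsum[OF summ[OF \<open>\<tau>0 \<in> K\<close>]]]) (use eta in auto)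
    qed
    then obtain Nf where Nf: "\<And>\<tau>0. \<tau>0 \<in> K \<Longrightarrow> \<forall>F. finite F \<and> F \<subseteq> I \<and> (\<forall>i\<in>F. Nf \<tau>0 \<le> i) \<longrightarrow> (\<Sum>i\<in>F. (x i \<tau>0)\<^sup>2) < \<eta>\<^sup>2"
      by metis
    have cov: "K \<subseteq> (\<Union>\<tau>0\<in>K. ball \<tau>0 (d \<tau>0))" using d by force
    obtain C where C: "C \<subseteq> K" "finite C" "K \<subseteq> (\<Union>\<tau>0\<in>C. ball \<tau>0 (d \<tau>0))"
      using compactE_image[OF K _ cov] by blast
    define N where "N = Max (insert 0 (Nf ` C))"
    show "\<exists>N. \<forall>\<tau>\<in>K. \<forall>F. finite F \<and> F \<subseteq> I \<and> (\<forall>i\<in>F. N \<le> i) \<longrightarrow> \<bar>\<Sum>i\<in>F. (x i \<tau>)\<^sup>2\<bar> \<le> \<epsilon>"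
    proof (intro exI[of _ N] ballI allI impI)
      fix \<tau> F assume tK: "\<tau> \<in> K" and F: "finite F \<and> F \<subseteq> I \<and> (\<forall>i\<in>F. N \<le> i)"
      obtain \<tau>0 where t0: "\<tau>0 \<in> C" "dist \<tau>0 \<tau> < d \<tau>0" using C(3) tK by auto
      have t0K: "\<tau>0 \<in> K" using t0 C by auto
      have "Nf \<tau>0 \<le> N" unfolding N_def using C(2) t0(1) by (intro Max_ge) auto
      hence s1: "(\<Sum>i\<in>F. (x i \<tau>0)\<^sup>2) < \<eta>\<^sup>2" using Nf[OF t0K] F by fastforce
      have s2: "(\<Sum>i\<in>F. (x i \<tau> - x i \<tau>0)\<^sup>2) \<le> \<eta>\<^sup>2"
        using d[OF t0K] tK t0(2) F by (simp add: dist_commute)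
      have "sqrt (\<Sum>i\<in>F. (x i \<tau>)\<^sup>2) \<le> sqrt (\<Sum>i\<in>F. (x i \<tau>0)\<^sup>2) + sqrt (\<Sum>i\<in>F. (x i \<tau> - x i \<tau>0)\<^sup>2)"
        by (rule sqrt_sum_tri)
      also have "\<dots> \<le> \<eta> + \<eta>"
        using s1 s2 eta real_sqrt_le_mono[of _ "\<eta>\<^sup>2"] by (intro add_mono) (auto simp: less_imp_le)
      also have "\<dots> = sqrt \<epsilon>" by (simp add: \<eta>_def)
      finally have "sqrt (\<Sum>i\<in>F. (x i \<tau>)\<^sup>2) \<le> sqrt \<epsilon>" .
      hence "(\<Sum>i\<in>F. (x i \<tau>)\<^sup>2) \<le> \<epsilon>" by simp
      moreover have "0 \<le> (\<Sum>i\<in>F. (x i \<tau>)\<^sup>2)" by (simp add: sum_nonneg)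
      ultimately show "\<bar>\<Sum>i\<in>F. (x i \<tau>)\<^sup>2\<bar> \<le> \<epsilon>" by simp
    qed
  qed
  show "ubnd I K (\<lambda>i \<tau>. (x i \<tau>)\<^sup>2)"
    unfolding ubnd_def
  proof -
    have "\<forall>\<tau>0\<in>K. \<exists>\<delta>>0. \<forall>\<tau>\<in>K. dist \<tau> \<tau>0 < \<delta> \<longrightarrow>
        (\<forall>F. finite F \<and> F \<subseteq> I \<longrightarrow> (\<Sum>i\<in>F. (x i \<tau> - x i \<tau>0)\<^sup>2) \<le> 1)"
      using cont by simp
    then obtain d where d: "\<And>\<tau>0. \<tau>0 \<in> K \<Longrightarrow> d \<tau>0 > 0 \<and> (\<forall>\<tau>\<in>K. dist \<tau> \<tau>0 < d \<tau>0 \<longrightarrow>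
        (\<forall>F. finite F \<and> F \<subseteq> I \<longrightarrow> (\<Sum>i\<in>F. (x i \<tau> - x i \<tau>0)\<^sup>2) \<le> 1))"
      by metis
    have cov: "K \<subseteq> (\<Union>\<tau>0\<in>K. ball \<tau>0 (d \<tau>0))" using d by force
    obtain C where C: "C \<subseteq> K" "finite C" "K \<subseteq> (\<Union>\<tau>0\<in>C. ball \<tau>0 (d \<tau>0))"
      using compactE_image[OF K _ cov] by blast
    define Bf where "Bf \<tau>0 = (sqrt (infsum (\<lambda>i. (x i \<tau>0)\<^sup>2) I) + 1)\<^sup>2" for \<tau>0
    define B where "B = Max (insert 0 (Bf ` C))"
    show "\<exists>B. \<forall>\<tau>\<in>K. \<forall>F. finite F \<and> F \<subseteq> I \<longrightarrow> (\<Sum>i\<in>F. (x i \<tau>)\<^sup>2) \<le> B"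
    proof (intro exI[of _ B] ballI allI impI)
      fix \<tau> F assume tK: "\<tau> \<in> K" and F: "finite F \<and> F \<subseteq> I"
      obtain \<tau>0 where t0: "\<tau>0 \<in> C" "dist \<tau>0 \<tau> < d \<tau>0" using C(3) tK by auto
      have t0K: "\<tau>0 \<in> K" using t0 C by auto
      have "Bf \<tau>0 \<le> B" unfolding B_def using C(2) t0(1) by (intro Max_ge) auto
      have s1: "(\<Sum>i\<in>F. (x i \<tau>0)\<^sup>2) \<le> infsum (\<lambda>i. (x i \<tau>0)\<^sup>2) I"
        using F by (intro finite_sum_le_infsum summ t0K) auto
      have s2: "(\<Sum>i\<in>F. (x i \<tau> - x i \<tau>0)\<^sup>2) \<le> 1"
        using d[OF t0K] tK t0(2) F by (simp add: dist_commute)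
      have "sqrt (\<Sum>i\<in>F. (x i \<tau>)\<^sup>2) \<le> sqrt (\<Sum>i\<in>F. (x i \<tau>0)\<^sup>2) + sqrt (\<Sum>i\<in>F. (x i \<tau> - x i \<tau>0)\<^sup>2)"
        by (rule sqrt_sum_tri)
      also have "\<dots> \<le> sqrt (infsum (\<lambda>i. (x i \<tau>0)\<^sup>2) I) + 1"
        using s1 s2 by (intro add_mono) auto
      finally have "(sqrt (\<Sum>i\<in>F. (x i \<tau>)\<^sup>2))\<^sup>2 \<le> Bf \<tau>0"
        unfolding Bf_def by (intro power_mono) (auto simp: sum_nonneg)
      hence "(\<Sum>i\<in>F. (x i \<tau>)\<^sup>2) \<le> Bf \<tau>0"
        using sum_nonneg[of F "\<lambda>i. (x i \<tau>)\<^sup>2"] by simp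
      thus "(\<Sum>i\<in>F. (x i \<tau>)\<^sup>2) \<le> B" using \<open>Bf \<tau>0 \<le> B\<close> by simp
    qed
  qed
qed

lemma utail_cs: fixes x y :: "nat \<Rightarrow> real \<Rightarrow> real"
  assumes ux: "utail I K (\<lambda>i \<tau>. (x i \<tau>)\<^sup>2)" and yb: "ubnd I K (\<lambda>i \<tau>. (y i \<tau>)\<^sup>2)"
  shows "utail I K (\<lambda>i \<tau>. x i \<tau> * y i \<tau>)"
  unfolding utail_def
proof (intro allI impI)
  fix \<epsilon> :: real assume ep: "\<epsilon> > 0"
  obtain B where B: "\<And>\<tau> F. \<tau> \<in> K \<Longrightarrow> finite F \<and> F \<subseteq> I \<Longrightarrow> (\<Sum>i\<in>F. (y i \<tau>)\<^sup>2) \<le> B"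
    using yb unfolding ubnd_def by blast
  define B' where "B' = \<bar>B\<bar> + 1"
  have B'p: "B' > 0" by (simp add: B'_def)
  obtain N where N: "\<And>\<tau> F. \<tau> \<in> K \<Longrightarrow> finite F \<and> F \<subseteq> I \<and> (\<forall>i\<in>F. N \<le> i) \<Longrightarrow> \<bar>\<Sum>i\<in>F. (x i \<tau>)\<^sup>2\<bar> \<le> \<epsilon>\<^sup>2 / B'"
    using ux ep B'p unfolding utail_def by (meson divide_pos_pos zero_less_power)
  show "\<exists>N. \<forall>\<tau>\<in>K. \<forall>F. finite F \<and> F \<subseteq> I \<and> (\<forall>i\<in>F. N \<le> i) \<longrightarrow> \<bar>\<Sum>i\<in>F. x i \<tau> * y i \<tau>\<bar> \<le> \<epsilon>"
  proof (intro exI[of _ N] ballI allI impI)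
    fix \<tau> F assume tK: "\<tau> \<in> K" and F: "finite F \<and> F \<subseteq> I \<and> (\<forall>i\<in>F. N \<le> i)"
    have "\<bar>\<Sum>i\<in>F. x i \<tau> * y i \<tau>\<bar> \<le> (\<Sum>i\<in>F. \<bar>x i \<tau>\<bar> * \<bar>y i \<tau>\<bar>)"
      using sum_abs[of "\<lambda>i. x i \<tau> * y i \<tau>" F] by (simp add: abs_mult)
    also have "\<dots> \<le> L2_set (\<lambda>i. x i \<tau>) F * L2_set (\<lambda>i. y i \<tau>) F" by (rule L2_set_mult_ineq)
    also have "\<dots> \<le> sqrt (\<epsilon>\<^sup>2 / B') * sqrt B'"
    proof (intro mult_mono)
      have "(\<Sum>i\<in>F. (x i \<tau>)\<^sup>2) \<le> \<epsilon>\<^sup>2 / B'" using N[OF tK F] by simp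
      thus "L2_set (\<lambda>i. x i \<tau>) F \<le> sqrt (\<epsilon>\<^sup>2 / B')" unfolding L2_set_def by simp
      have "(\<Sum>i\<in>F. (y i \<tau>)\<^sup>2) \<le> B'" using B[OF tK] F unfolding B'_def by force
      thus "L2_set (\<lambda>i. y i \<tau>) F \<le> sqrt B'" unfolding L2_set_def by simp
    qed (use B'p in auto)
    also have "\<dots> = \<epsilon>" using B'p ep by (simp add: real_sqrt_divide)
    finally show "\<bar>\<Sum>i\<in>F. x i \<tau> * y i \<tau>\<bar> \<le> \<epsilon>" .
  qed
qed

lemma utail_add: assumes "utail I K a" "utail I K b"
  shows "utail I K (\<lambda>i \<tau>. a i \<tau> + b i \<tau>)"
  unfolding utail_def
proof (intro allI impI)
  fix \<epsilon> :: real assume ep: "\<epsilon> > 0"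
  obtain N1 where N1: "\<And>\<tau> F. \<tau> \<in> K \<Longrightarrow> finite F \<and> F \<subseteq> I \<and> (\<forall>i\<in>F. N1 \<le> i) \<Longrightarrow> \<bar>\<Sum>i\<in>F. a i \<tau>\<bar> \<le> \<epsilon>/2"
    using assms(1) ep unfolding utail_def by (meson half_gt_zero)
  obtain N2 where N2: "\<And>\<tau> F. \<tau> \<in> K \<Longrightarrow> finite F \<and> F \<subseteq> I \<and> (\<forall>i\<in>F. N2 \<le> i) \<Longrightarrow> \<bar>\<Sum>i\<in>F. b i \<tau>\<bar> \<le> \<epsilon>/2"
    using assms(2) ep unfolding utail_def by (meson half_gt_zero)
  show "\<exists>N. \<forall>\<tau>\<in>K. \<forall>F. finite F \<and> F \<subseteq> I \<and> (\<forall>i\<in>F. N \<le> i) \<longrightarrow> \<bar>\<Sum>i\<in>F. a i \<tau> + b i \<tau>\<bar> \<le> \<epsilon>"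
  proof (intro exI[of _ "max N1 N2"] ballI allI impI)
    fix \<tau> F assume tK: "\<tau> \<in> K" and F: "finite F \<and> F \<subseteq> I \<and> (\<forall>i\<in>F. max N1 N2 \<le> i)"
    have "\<bar>\<Sum>i\<in>F. a i \<tau>\<bar> \<le> \<epsilon>/2" using N1[OF tK] F by auto
    moreover have "\<bar>\<Sum>i\<in>F. b i \<tau>\<bar> \<le> \<epsilon>/2" using N2[OF tK] F by auto
    ultimately show "\<bar>\<Sum>i\<in>F. a i \<tau> + b i \<tau>\<bar> \<le> \<epsilon>" by (simp add: sum.distrib)
  qed
qed

lemma utail_mult: assumes "utail I K a" and g: "\<And>\<tau>. \<tau> \<in> K \<Longrightarrow> \<bar>g \<tau>\<bar> \<le> C"
  shows "utail I K (\<lambda>i \<tau>. g \<tau> * a i \<tau>)"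
  unfolding utail_def
proof (intro allI impI)
  fix \<epsilon> :: real assume ep: "\<epsilon> > 0"
  define C' where "C' = \<bar>C\<bar> + 1"
  have C'p: "C' > 0" by (simp add: C'_def)
  obtain N where N: "\<And>\<tau> F. \<tau> \<in> K \<Longrightarrow> finite F \<and> F \<subseteq> I \<and> (\<forall>i\<in>F. N \<le> i) \<Longrightarrow> \<bar>\<Sum>i\<in>F. a i \<tau>\<bar> \<le> \<epsilon> / C'"
    using assms(1) ep C'p unfolding utail_def by (meson divide_pos_pos)
  show "\<exists>N. \<forall>\<tau>\<in>K. \<forall>F. finite F \<and> F \<subseteq> I \<and> (\<forall>i\<in>F. N \<le> i) \<longrightarrow> \<bar>\<Sum>i\<in>F. g \<tau> * a i \<tau>\<bar> \<le> \<epsilon>"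
  proof (intro exI[of _ N] ballI allI impI)
    fix \<tau> F assume tK: "\<tau> \<in> K" and F: "finite F \<and> F \<subseteq> I \<and> (\<forall>i\<in>F. N \<le> i)"
    have "\<bar>\<Sum>i\<in>F. g \<tau> * a i \<tau>\<bar> = \<bar>g \<tau>\<bar> * \<bar>\<Sum>i\<in>F. a i \<tau>\<bar>" by (simp add: sum_distrib_left[symmetric] abs_mult)
    also have "\<dots> \<le> C' * (\<epsilon> / C')"
      using g[OF tK] N[OF tK F] by (intro mult_mono) (auto simp: C'_def)
    also have "\<dots> = \<epsilon>" using C'p by simp
    finally show "\<bar>\<Sum>i\<in>F. g \<tau> * a i \<tau>\<bar> \<le> \<epsilon>" .
  qed
qed

lemma utail_dom: assumes "utail I K b" and C: "C > 0"
  and d: "\<And>i \<tau>. i \<in> I \<Longrightarrow> \<tau> \<in> K \<Longrightarrow> 0 \<le> a i \<tau> \<and> a i \<tau> \<le> C * b i \<tau>"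
  shows "utail I K a"
proof -
  have "utail I K (\<lambda>i \<tau>. C * b i \<tau>)" using utail_mult[OF assms(1), of "\<lambda>_. C" C] C by simp
  thus ?thesis unfolding utail_def
  proof (intro allI impI)
    fix \<epsilon> :: real assume ep: "\<epsilon> > 0" and u: "\<forall>\<epsilon>>0. \<exists>N. \<forall>\<tau>\<in>K. \<forall>F. finite F \<and> F \<subseteq> I \<and> (\<forall>i\<in>F. N \<le> i) \<longrightarrow> \<bar>\<Sum>i\<in>F. C * b i \<tau>\<bar> \<le> \<epsilon>"
    then obtain N where N: "\<And>\<tau> F. \<tau> \<in> K \<Longrightarrow> finite F \<and> F \<subseteq> I \<and> (\<forall>i\<in>F. N \<le> i) \<Longrightarrow> \<bar>\<Sum>i\<in>F. C * b i \<tau>\<bar> \<le> \<epsilon>"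
      by meson
    show "\<exists>N. \<forall>\<tau>\<in>K. \<forall>F. finite F \<and> F \<subseteq> I \<and> (\<forall>i\<in>F. N \<le> i) \<longrightarrow> \<bar>\<Sum>i\<in>F. a i \<tau>\<bar> \<le> \<epsilon>"
    proof (intro exI[of _ N] ballI allI impI)
      fix \<tau> F assume tK: "\<tau> \<in> K" and F: "finite F \<and> F \<subseteq> I \<and> (\<forall>i\<in>F. N \<le> i)"
      have "0 \<le> (\<Sum>i\<in>F. a i \<tau>)" using d tK F by (intro sum_nonneg) auto
      moreover have "(\<Sum>i\<in>F. a i \<tau>) \<le> (\<Sum>i\<in>F. C * b i \<tau>)" using d tK F by (intro sum_mono) auto
      ultimately show "\<bar>\<Sum>i\<in>F. a i \<tau>\<bar> \<le> \<epsilon>" using N[OF tK F] by simp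
    qed
  qed
qed

lemma ubnd_dom: assumes "ubnd I K b" and C: "C > 0"
  and d: "\<And>i \<tau>. i \<in> I \<Longrightarrow> \<tau> \<in> K \<Longrightarrow> a i \<tau> \<le> C * b i \<tau>"
  shows "ubnd I K a"
proof -
  obtain B where B: "\<And>\<tau> F. \<tau> \<in> K \<Longrightarrow> finite F \<and> F \<subseteq> I \<Longrightarrow> (\<Sum>i\<in>F. b i \<tau>) \<le> B"
    using assms(1) unfolding ubnd_def by blast
  show ?thesis unfolding ubnd_def
  proof (intro exI[of _ "C * B"] ballI allI impI)
    fix \<tau> F assume tK: "\<tau> \<in> K" and F: "finite F \<and> F \<subseteq> I"
    have "(\<Sum>i\<in>F. a i \<tau>) \<le> (\<Sum>i\<in>F. C * b i \<tau>)" using d tK F by (intro sum_mono) auto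
    also have "\<dots> = C * (\<Sum>i\<in>F. b i \<tau>)" by (simp add: sum_distrib_left)
    also have "\<dots> \<le> C * B" using B[OF tK F] C by simp
    finally show "(\<Sum>i\<in>F. a i \<tau>) \<le> C * B" .
  qed
qed

lemma ubnd_add: assumes "ubnd I K a" "ubnd I K b" shows "ubnd I K (\<lambda>i \<tau>. a i \<tau> + b i \<tau>)"
proof -
  obtain A where A: "\<And>\<tau> F. \<tau> \<in> K \<Longrightarrow> finite F \<and> F \<subseteq> I \<Longrightarrow> (\<Sum>i\<in>F. a i \<tau>) \<le> A"
    using assms(1) unfolding ubnd_def by blast
  obtain B where B: "\<And>\<tau> F. \<tau> \<in> K \<Longrightarrow> finite F \<and> F \<subseteq> I \<Longrightarrow> (\<Sum>i\<in>F. b i \<tau>) \<le> B"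
    using assms(2) unfolding ubnd_def by blast
  show ?thesis unfolding ubnd_def
    using A B by (intro exI[of _ "A + B"]) (auto simp: sum.distrib intro: add_mono)
qed

lemma ubnd_const: fixes y :: "nat \<Rightarrow> real" assumes "(\<lambda>i. (y i)\<^sup>2) summable_on I"
  shows "ubnd I K (\<lambda>i \<tau>. (y i)\<^sup>2)"
  unfolding ubnd_def using assms
  by (intro exI[of _ "infsum (\<lambda>i. (y i)\<^sup>2) I"] ballI allI impI finite_sum_le_infsum) auto

lemma utail_const: fixes y :: "nat \<Rightarrow> real" assumes s: "(\<lambda>i. (y i)\<^sup>2) summable_on I"
  shows "utail I K (\<lambda>i \<tau>. (y i)\<^sup>2)"
  unfolding utail_def
proof (intro allI impI)
  fix \<epsilon> :: real assume ep: "\<epsilon> > 0"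
  obtain N where N: "\<And>F. finite F \<and> F \<subseteq> I \<and> (\<forall>i\<in>F. N \<le> i) \<Longrightarrow> (\<Sum>i\<in>F. (y i)\<^sup>2) < \<epsilon>"
    using tails_small[OF has_sum_infsum[OF s] _ ep] by auto
  show "\<exists>N. \<forall>\<tau>\<in>K. \<forall>F. finite F \<and> F \<subseteq> I \<and> (\<forall>i\<in>F. N \<le> i) \<longrightarrow> \<bar>\<Sum>i\<in>F. (y i)\<^sup>2\<bar> \<le> \<epsilon>"
  proof (intro exI[of _ N] ballI allI impI)
    fix \<tau> F assume "finite F \<and> F \<subseteq> I \<and> (\<forall>i\<in>F. N \<le> i)"
    thus "\<bar>\<Sum>i\<in>F. (y i)\<^sup>2\<bar> \<le> \<epsilon>" using N[of F] by (simp add: sum_nonneg)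
  qed
qed

lemma utail_subset: "utail I K a \<Longrightarrow> K' \<subseteq> K \<Longrightarrow> utail I K' a"
  unfolding utail_def by (meson subsetD)


lemma ext_sums: fixes g :: "nat \<Rightarrow> real"
  assumes "(g has_sum s) I" shows "(\<lambda>n. if n \<in> I then g n else 0) sums s"
proof -
  have "((\<lambda>n. if n \<in> I then g n else 0) has_sum s) UNIV"
    using assms by (subst has_sum_cong_neutral[where T = I]) auto
  thus ?thesis by (rule has_sum_imp_sums)
qed

lemma series_deriv:
  fixes a a' :: "nat \<Rightarrow> real \<Rightarrow> real" and A A' :: "real \<Rightarrow> real"
  assumes der: "\<And>i \<tau>. i \<in> I \<Longrightarrow> 0 \<le> \<tau> \<Longrightarrow> (a i has_real_derivative a' i \<tau>) (at \<tau> within {0..})"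
    and hs: "\<And>\<tau>. 0 \<le> \<tau> \<Longrightarrow> ((\<lambda>i. a i \<tau>) has_sum A \<tau>) I"
    and hs': "\<And>\<tau>. 0 \<le> \<tau> \<Longrightarrow> ((\<lambda>i. a' i \<tau>) has_sum A' \<tau>) I"
    and ut: "\<And>T. utail I {0..T} a'"
    and t: "0 \<le> t"
  shows "(A has_real_derivative A' t) (at t within {0..})"
proof -
  define T where "T = t + 1"
  define S where "S = {0..<T}"
  define fe where "fe n = (if n \<in> I then a n else (\<lambda>_. 0))" for n
  define fe' where "fe' n x = (if n \<in> I then a' n x else 0)" for n x
  have tS: "t \<in> S" using t by (simp add: S_def T_def)
  have SK: "S \<subseteq> {0..T}" by (auto simp: S_def)
  have d1: "(fe n has_field_derivative fe' n x) (at x within S)" if "x \<in> S" for n x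
  proof (cases "n \<in> I")
    case True
    have "(a n has_real_derivative a' n x) (at x within {0..})" using der True that by (simp add: S_def)
    hence "(a n has_real_derivative a' n x) (at x within S)" by (rule DERIV_subset) (auto simp: S_def)
    thus ?thesis using True by (simp add: fe_def fe'_def)
  next
    case False thus ?thesis by (simp add: fe_def fe'_def)
  qed
  have sm: "(\<lambda>n. fe n x) sums A x" if "0 \<le> x" for x
  proof -
    have "(\<lambda>n. fe n x) = (\<lambda>n. if n \<in> I then a n x else 0)" by (auto simp: fe_def)
    thus ?thesis using ext_sums[OF hs[OF that]] by simp
  qed
  have sm': "(\<lambda>n. fe' n x) sums A' x" if "0 \<le> x" for x
    using ext_sums[OF hs'[OF that]] by (simp add: fe'_def)
  have ul: "uniform_limit S (\<lambda>n x. \<Sum>i<n. fe' i x) A' sequentially"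
    unfolding uniform_limit_sequentially_iff
  proof (intro allI impI)
    fix \<epsilon> :: real assume ep: "\<epsilon> > 0"
    obtain N where N: "\<And>\<tau> F. \<tau> \<in> {0..T} \<Longrightarrow> finite F \<and> F \<subseteq> I \<and> (\<forall>i\<in>F. N \<le> i) \<Longrightarrow> \<bar>\<Sum>i\<in>F. a' i \<tau>\<bar> \<le> \<epsilon>/2"
      using ut[of T] ep unfolding utail_def by (meson half_gt_zero)
    show "\<exists>N. \<forall>n\<ge>N. \<forall>x\<in>S. dist (\<Sum>i<n. fe' i x) (A' x) < \<epsilon>"
    proof (intro exI[of _ N] allI impI ballI)
      fix n x assume n: "N \<le> n" and x: "x \<in> S"
      have x0: "0 \<le> x" using x by (simp add: S_def)
      have xK: "x \<in> {0..T}" using x SK by auto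
      have lim: "(\<lambda>m. \<bar>(\<Sum>i<m. fe' i x) - (\<Sum>i<n. fe' i x)\<bar>) \<longlonglongrightarrow> \<bar>A' x - (\<Sum>i<n. fe' i x)\<bar>"
        using sm'[OF x0] unfolding sums_def by (intro tendsto_intros)
      have "\<bar>A' x - (\<Sum>i<n. fe' i x)\<bar> \<le> \<epsilon>/2"
      proof (rule LIMSEQ_le_const2[OF lim], intro exI[of _ n] allI impI)
        fix m assume m: "n \<le> m"
        have "(\<Sum>i<m. fe' i x) - (\<Sum>i<n. fe' i x) = (\<Sum>i\<in>{n..<m}. fe' i x)"
          using sum_diff_nat_ivl[of 0 n m "\<lambda>i. fe' i x"] m by (simp add: atLeast0LessThan)
        also have "\<dots> = (\<Sum>i\<in>{n..<m} \<inter> I. a' i x)"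
          unfolding fe'_def by (simp add: sum.inter_restrict)
        finally have "\<bar>(\<Sum>i<m. fe' i x) - (\<Sum>i<n. fe' i x)\<bar> = \<bar>\<Sum>i\<in>{n..<m} \<inter> I. a' i x\<bar>" by simp
        also have "\<dots> \<le> \<epsilon>/2" using N[OF xK, of "{n..<m} \<inter> I"] n by auto
        finally show "\<bar>(\<Sum>i<m. fe' i x) - (\<Sum>i<n. fe' i x)\<bar> \<le> \<epsilon>/2" .
      qed
      thus "dist (\<Sum>i<n. fe' i x) (A' x) < \<epsilon>" using ep by (simp add: dist_real_def abs_minus_commute)
    qed
  qed
  have "\<exists>g. \<forall>x\<in>S. (\<lambda>n. fe n x) sums g x \<and> (g has_field_derivative A' x) (at x within S)"
    by (rule has_field_derivative_series[OF _ d1 ul tS sums_summable[OF sm[OF t]]])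
      (auto simp: S_def)
  then obtain g where g: "\<And>x. x \<in> S \<Longrightarrow> (\<lambda>n. fe n x) sums g x \<and> (g has_field_derivative A' x) (at x within S)"
    by blast
  have gA: "g x = A x" if "x \<in> S" for x
    using g[OF that] sm[of x] that by (auto simp: S_def intro: sums_unique2)
  have "(A has_field_derivative A' t) (at t within S)"
    using has_field_derivative_transform_within[OF conjunct2[OF g[OF tS]], of 1] tS gA by auto
  moreover have "at t within S = at t within {0..}"
    by (rule at_within_nhd[of t "{..<T}"]) (auto simp: S_def T_def)
  ultimately show ?thesis by simp
qed

lemma deriv_squeeze0:
  fixes R H :: "real \<Rightarrow> real"
  assumes H: "(H has_real_derivative 0) (at t within X)" and Ht: "H t = 0" and Rt: "R t = 0"
    and b: "\<And>s. s \<in> X \<Longrightarrow> \<bar>R s\<bar> \<le> H s"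
  shows "(R has_real_derivative 0) (at t within X)"
proof -
  have "((\<lambda>y. (H y - H t) / (y - t)) \<longlongrightarrow> 0) (at t within X)"
    using H by (simp add: has_field_derivative_iff)
  hence "((\<lambda>y. H y / (y - t)) \<longlongrightarrow> 0) (at t within X)" using Ht by simp
  from tendsto_rabs_zero[OF this] have l: "((\<lambda>y. \<bar>H y / (y - t)\<bar>) \<longlongrightarrow> 0) (at t within X)" .
  have "((\<lambda>y. (R y - R t) / (y - t)) \<longlongrightarrow> 0) (at t within X)"
  proof (rule Lim_null_comparison[OF _ l])
    show "\<forall>\<^sub>F y in at t within X. norm ((R y - R t) / (y - t)) \<le> \<bar>H y / (y - t)\<bar>"
      unfolding eventually_at_filter
    proof (rule always_eventually, intro allI impI)
      fix y assume "y \<noteq> t" "y \<in> X"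
      hence "\<bar>R y\<bar> \<le> \<bar>H y\<bar>" using b[of y] by simp
      thus "norm ((R y - R t) / (y - t)) \<le> \<bar>H y / (y - t)\<bar>"
        using Rt by (simp add: abs_divide divide_right_mono)
    qed
  qed
  thus ?thesis by (simp add: has_field_derivative_iff)
qed


lemma utail_cong: assumes "utail I K a" and "\<And>i \<tau>. i \<in> I \<Longrightarrow> \<tau> \<in> K \<Longrightarrow> a i \<tau> = b i \<tau>"
  shows "utail I K b"
proof -
  have "sum (\<lambda>i. a i \<tau>) F = sum (\<lambda>i. b i \<tau>) F" if "\<tau> \<in> K" "F \<subseteq> I" for \<tau> F
    using assms(2) that by (intro sum.cong) auto
  thus ?thesis using assms(1) unfolding utail_def by metis
qed

lemma prod_summable: fixes x y :: "nat \<Rightarrow> real"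
  assumes "(\<lambda>i. (x i)\<^sup>2) summable_on I" "(\<lambda>i. (y i)\<^sup>2) summable_on I"
  shows "(\<lambda>i. x i * y i) summable_on I"
  using wsum_summable[of I "\<lambda>_. 1" x y] assms by simp

lemma pos_pw: fixes a b :: real
  shows "0 \<le> (max a 0)\<^sup>2 - (max b 0)\<^sup>2 - 2 * ((a - b) * max b 0) \<and>
         (max a 0)\<^sup>2 - (max b 0)\<^sup>2 - 2 * ((a - b) * max b 0) \<le> (a - b)\<^sup>2"
proof (cases "a \<ge> 0"; cases "b \<ge> 0")
  assume "a \<ge> 0" "b \<ge> 0"
  hence "(max a 0)\<^sup>2 - (max b 0)\<^sup>2 - 2 * ((a - b) * max b 0) = (a - b)\<^sup>2"
    by (simp add: max_def power2_eq_square algebra_simps)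
  thus ?thesis by simp
next
  assume "a \<ge> 0" "\<not> b \<ge> 0"
  hence e: "(max a 0)\<^sup>2 - (max b 0)\<^sup>2 - 2 * ((a - b) * max b 0) = a\<^sup>2"
    by (simp add: max_def power2_eq_square algebra_simps)
  have "a * b \<le> 0" using \<open>a \<ge> 0\<close> \<open>\<not> b \<ge> 0\<close> by (simp add: mult_nonneg_nonpos)
  moreover have "(a - b)\<^sup>2 = a\<^sup>2 - 2 * (a * b) + b\<^sup>2" by (simp add: power2_eq_square algebra_simps)
  ultimately show ?thesis using e zero_le_power2[of b] zero_le_power2[of a] by linarith
next
  assume "\<not> a \<ge> 0" "b \<ge> 0"
  hence e: "(max a 0)\<^sup>2 - (max b 0)\<^sup>2 - 2 * ((a - b) * max b 0) = b * (b - 2 * a)"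
    by (simp add: max_def power2_eq_square algebra_simps)
  have "0 \<le> b * (b - 2 * a)" using \<open>\<not> a \<ge> 0\<close> \<open>b \<ge> 0\<close> by simp
  moreover have "(a - b)\<^sup>2 = b * (b - 2 * a) + a\<^sup>2" by (simp add: power2_eq_square algebra_simps)
  ultimately show ?thesis using e by simp
next
  assume "\<not> a \<ge> 0" "\<not> b \<ge> 0" thus ?thesis by (simp add: max_def)
qed

lemma pos_rem: assumes u: "u \<in> L2 M" and w: "w \<in> L2 M"
  defines "R \<equiv> ip M (pospart u) (pospart u) - ip M (pospart w) (pospart w) - 2 * (ip M u (pospart w) - ip M w (pospart w))"
  shows "0 \<le> R \<and> R \<le> ip M (u - w) (u - w)"
proof -
  have pu: "pospart u \<in> L2 M" and pw: "pospart w \<in> L2 M" using L2_pospart u w by auto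
  have i1: "integrable M (\<lambda>x. pospart u x * pospart u x)" by (rule L2_int_mult[OF pu pu])
  have i2: "integrable M (\<lambda>x. pospart w x * pospart w x)" by (rule L2_int_mult[OF pw pw])
  have i3: "integrable M (\<lambda>x. u x * pospart w x)" by (rule L2_int_mult[OF u pw])
  have i4: "integrable M (\<lambda>x. w x * pospart w x)" by (rule L2_int_mult[OF w pw])
  have i5: "integrable M (\<lambda>x. (u - w) x * (u - w) x)" by (rule L2_int_mult[OF L2_diff'[OF u w] L2_diff'[OF u w]])
  define h where "h x = pospart u x * pospart u x - pospart w x * pospart w x - 2 * (u x * pospart w x - w x * pospart w x)" for x
  have ih: "integrable M h" unfolding h_def using i1 i2 i3 i4 by auto
  have Rh: "R = integral\<^sup>L M h" unfolding R_def h_def ip_def using i1 i2 i3 i4 by simp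
  have hb: "0 \<le> h x \<and> h x \<le> (u - w) x * (u - w) x" for x
    using pos_pw[of "u x" "w x"] unfolding h_def pospart_def by (simp add: power2_eq_square algebra_simps)
  have "0 \<le> integral\<^sup>L M h" using hb by (intro integral_nonneg_AE) auto
  moreover have "integral\<^sup>L M h \<le> ip M (u - w) (u - w)"
    unfolding ip_def using ih i5 hb by (intro integral_mono) auto
  ultimately show ?thesis using Rh by simp
qed

lemma ip_pos_le: assumes u: "u \<in> L2 M" shows "ip M (pospart u) (pospart u) \<le> ip M u u"
  unfolding ip_def using L2_int_mult[OF L2_pospart[OF u] L2_pospart[OF u]] L2_int_mult[OF u u]
  by (intro integral_mono) (auto simp: pospart_def max_def)

context sset begin

definition lm where "lm = (SOME m. m > 0 \<and> (\<forall>i\<in>I. m \<le> lam i))"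

lemma lm: "lm > 0" "\<And>i. i \<in> I \<Longrightarrow> lm \<le> lam i"
  using someI_ex[OF lam_min] unfolding lm_def by auto

definition Q2 where "Q2 u = infsum (\<lambda>i. lam i * (coef M e u i)\<^sup>2) I"
definition Q1 where "Q1 u = infsum (\<lambda>i. sqrt (lam i) * (coef M e u i)\<^sup>2) I"

lemma Q2_nonneg: "0 \<le> Q2 u" unfolding Q2_def using lam_pos by (intro infsum_nonneg mult_nonneg_nonneg) (auto intro: less_imp_le)
lemma Q1_nonneg: "0 \<le> Q1 u" unfolding Q1_def using lam_pos by (intro infsum_nonneg mult_nonneg_nonneg) (auto intro: less_imp_le)

lemma nrm_r2: "nrm_r M I e lam 2 u = sqrt (Q2 u)"
  unfolding nrm_r_def Q2_def using lam_pos by (auto intro!: arg_cong[where f = sqrt] infsum_cong simp: less_imp_le)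

lemma nrm_r1: "nrm_r M I e lam 1 u = sqrt (Q1 u)"
  unfolding nrm_r_def Q1_def using lam_pos by (auto intro!: arg_cong[where f = sqrt] infsum_cong simp: less_imp_le powr_half_sqrt)

lemma nrm_r2_sq: "(nrm_r M I e lam 2 u)\<^sup>2 = Q2 u" using Q2_nonneg nrm_r2 by simp
lemma nrm_r1_sq: "(nrm_r M I e lam 1 u)\<^sup>2 = Q1 u" using Q1_nonneg nrm_r1 by simp

lemma Hr2_iff: "u \<in> Hr M I e lam 2 \<longleftrightarrow> u \<in> L2 M \<and> (\<lambda>i. lam i * (coef M e u i)\<^sup>2) summable_on I"
proof -
  have "(\<lambda>i. lam i powr (2/2) * (coef M e u i)\<^sup>2) summable_on I \<longleftrightarrow> (\<lambda>i. lam i * (coef M e u i)\<^sup>2) summable_on I"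
    using lam_pos by (intro summable_on_cong) (auto simp: less_imp_le)
  thus ?thesis unfolding Hr_def by simp
qed

lemma Hr2_L2: "u \<in> Hr M I e lam 2 \<Longrightarrow> u \<in> L2 M" using Hr2_iff by simp
lemma Hr2_summ: "u \<in> Hr M I e lam 2 \<Longrightarrow> (\<lambda>i. lam i * (coef M e u i)\<^sup>2) summable_on I" using Hr2_iff by simp
lemma Q2_hs: "u \<in> Hr M I e lam 2 \<Longrightarrow> ((\<lambda>i. lam i * (coef M e u i)\<^sup>2) has_sum Q2 u) I"
  unfolding Q2_def using Hr2_summ by simp

lemma Hr2_summ': "u \<in> Hr M I e lam 2 \<Longrightarrow> (\<lambda>i. (sqrt (lam i) * coef M e u i)\<^sup>2) summable_on I"
  using Hr2_summ[of u] lam_pos by (subst summable_on_cong[where g = "\<lambda>i. lam i * (coef M e u i)\<^sup>2"])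
    (auto simp: power_mult_distrib less_imp_le)

lemma sqlam_le: "i \<in> I \<Longrightarrow> sqrt (lam i) * x\<^sup>2 \<le> (1 / sqrt lm) * (lam i * x\<^sup>2)"
proof -
  assume i: "i \<in> I"
  have "sqrt lm * sqrt (lam i) \<le> sqrt (lam i) * sqrt (lam i)"
    using lm(2)[OF i] lam_pos[OF i] by (intro mult_right_mono) auto
  also have "\<dots> = lam i" using lam_pos[OF i] by simp
  finally have "sqrt lm * (sqrt (lam i) * x\<^sup>2) \<le> lam i * x\<^sup>2"
    by (metis mult.assoc mult_right_mono zero_le_power2)
  thus ?thesis using lm(1) by (simp add: field_simps)
qed

lemma one_le: "i \<in> I \<Longrightarrow> x\<^sup>2 \<le> (1 / lm) * (lam i * x\<^sup>2)"
proof -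
  assume i: "i \<in> I"
  have "lm * x\<^sup>2 \<le> lam i * x\<^sup>2" using lm(2)[OF i] by (intro mult_right_mono) auto
  thus ?thesis using lm(1) by (simp add: field_simps)
qed

lemma Q1_summ: assumes "u \<in> Hr M I e lam 2" shows "(\<lambda>i. sqrt (lam i) * (coef M e u i)\<^sup>2) summable_on I"
proof -
  have "(\<lambda>i. (1 / sqrt lm) * (lam i * (coef M e u i)\<^sup>2)) summable_on I"
    using summable_on_cmult_right[OF Hr2_summ[OF assms]] .
  thus ?thesis
  proof (rule summable_on_comparison_test)
    fix i assume i: "i \<in> I"
    show "sqrt (lam i) * (coef M e u i)\<^sup>2 \<le> 1 / sqrt lm * (lam i * (coef M e u i)\<^sup>2)" by (rule sqlam_le[OF i])
    show "0 \<le> sqrt (lam i) * (coef M e u i)\<^sup>2" using lam_pos[OF i] by simp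
  qed
qed

lemma Q1_le: assumes "u \<in> Hr M I e lam 2" shows "Q1 u \<le> Q2 u / sqrt lm"
proof -
  have "Q1 u \<le> infsum (\<lambda>i. (1 / sqrt lm) * (lam i * (coef M e u i)\<^sup>2)) I"
    unfolding Q1_def by (rule infsum_mono[OF Q1_summ[OF assms] summable_on_cmult_right[OF Hr2_summ[OF assms]]])
      (rule sqlam_le)
  also have "\<dots> = Q2 u / sqrt lm" unfolding Q2_def
    using infsum_cmult_right'[of "1 / sqrt lm" "\<lambda>i. lam i * (coef M e u i)\<^sup>2" I] by simp
  finally show ?thesis .
qed

lemma ip_le_Q2: assumes "u \<in> Hr M I e lam 2" shows "ip M u u \<le> Q2 u / lm"
proof -
  have "ip M u u = infsum (\<lambda>i. (coef M e u i)\<^sup>2) I" using pars[OF Hr2_L2[OF assms]] by (simp add: infsumI)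
  also have "\<dots> \<le> infsum (\<lambda>i. (1 / lm) * (lam i * (coef M e u i)\<^sup>2)) I"
    by (rule infsum_mono[OF has_sum_imp_summable[OF pars[OF Hr2_L2[OF assms]]] summable_on_cmult_right[OF Hr2_summ[OF assms]]])
      (rule one_le)
  also have "\<dots> = Q2 u / lm" unfolding Q2_def
    using infsum_cmult_right'[of "1 / lm" "\<lambda>i. lam i * (coef M e u i)\<^sup>2" I] by simp
  finally show ?thesis .
qed

lemma Hr2_diff: assumes u: "u \<in> Hr M I e lam 2" and w: "w \<in> Hr M I e lam 2"
  shows "u - w \<in> Hr M I e lam 2"
proof -
  have uL: "u \<in> L2 M" and wL: "w \<in> L2 M" using u w Hr2_L2 by auto
  have "(\<lambda>i. 2 * (lam i * (coef M e u i)\<^sup>2) + 2 * (lam i * (coef M e w i)\<^sup>2)) summable_on I"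
    using summable_on_add[OF summable_on_cmult_right[OF Hr2_summ[OF u]] summable_on_cmult_right[OF Hr2_summ[OF w]]] .
  hence "(\<lambda>i. lam i * (coef M e (u - w) i)\<^sup>2) summable_on I"
  proof (rule summable_on_comparison_test)
    fix i assume i: "i \<in> I"
    have "(coef M e u i - coef M e w i)\<^sup>2 \<le> 2 * (coef M e u i)\<^sup>2 + 2 * (coef M e w i)\<^sup>2"
    proof -
      have "2 * (coef M e u i)\<^sup>2 + 2 * (coef M e w i)\<^sup>2 - (coef M e u i - coef M e w i)\<^sup>2 = (coef M e u i + coef M e w i)\<^sup>2"
        by (simp add: power2_eq_square algebra_simps)
      thus ?thesis using zero_le_power2[of "coef M e u i + coef M e w i"] by linarith
    qed
    hence "lam i * (coef M e u i - coef M e w i)\<^sup>2 \<le> lam i * (2 * (coef M e u i)\<^sup>2 + 2 * (coef M e w i)\<^sup>2)"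
      using lam_pos[OF i] by (intro mult_left_mono) auto
    thus "lam i * (coef M e (u - w) i)\<^sup>2 \<le> 2 * (lam i * (coef M e u i)\<^sup>2) + 2 * (lam i * (coef M e w i)\<^sup>2)"
      unfolding coef_diff'[OF uL wL i] by (simp add: algebra_simps)
    show "0 \<le> lam i * (coef M e (u - w) i)\<^sup>2" using lam_pos[OF i] by simp
  qed
  thus ?thesis using Hr2_iff L2_diff'[OF uL wL] by simp
qed

end


locale traj = sset M I e lam for M :: "'w measure" and I e lam +
  fixes p k :: real and f :: "'w \<Rightarrow> real" and U V :: "real \<Rightarrow> 'w \<Rightarrow> real"
  assumes fL: "f \<in> L2 M" and ws: "weak_solution M I e lam p k f U V"
begin

abbreviation "c i t \<equiv> coef M e (U t) i"
abbreviation "d i t \<equiv> coef M e (V t) i"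
abbreviation "q i t \<equiv> coef M e (pospart (U t)) i"
abbreviation "fc i \<equiv> coef M e f i"

definition G where "G i t = - lam i * c i t - d i t + (p - (nrm_r M I e lam 1 (U t))\<^sup>2) * sqrt (lam i) * c i t
             - k\<^sup>2 * q i t + fc i"

lemma UH: "0 \<le> t \<Longrightarrow> U t \<in> Hr M I e lam 2" using ws by (simp add: weak_solution_def)
lemma UL: "0 \<le> t \<Longrightarrow> U t \<in> L2 M" using UH Hr2_L2 by blast
lemma VL: "0 \<le> t \<Longrightarrow> V t \<in> L2 M" using ws by (simp add: weak_solution_def)
lemma PL: "0 \<le> t \<Longrightarrow> pospart (U t) \<in> L2 M" using UL L2_pospart by blast
lemma Ucont: "0 \<le> t0 \<Longrightarrow> ((\<lambda>t. nrm_r M I e lam 2 (U t - U t0)) \<longlongrightarrow> 0) (at t0 within {0..})"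
  using ws by (simp add: weak_solution_def)
lemma Vcont: "0 \<le> t0 \<Longrightarrow> ((\<lambda>t. nrm M (V t - V t0)) \<longlongrightarrow> 0) (at t0 within {0..})"
  using ws by (simp add: weak_solution_def)
lemma dc: "i \<in> I \<Longrightarrow> 0 \<le> t \<Longrightarrow> ((\<lambda>s. c i s) has_real_derivative d i t) (at t within {0..})"
  using ws by (simp add: weak_solution_def)
lemma dd: "i \<in> I \<Longrightarrow> 0 \<le> t \<Longrightarrow> ((\<lambda>s. d i s) has_real_derivative G i t) (at t within {0..})"
  using ws by (simp add: weak_solution_def G_def)

lemma tl_a: "utail I {0..T} (\<lambda>i \<tau>. (sqrt (lam i) * c i \<tau>)\<^sup>2) \<and> ubnd I {0..T} (\<lambda>i \<tau>. (sqrt (lam i) * c i \<tau>)\<^sup>2)"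
proof (rule utail_cont[OF compact_Icc])
  fix \<tau> assume "\<tau> \<in> {0..T}"
  thus "(\<lambda>i. (sqrt (lam i) * c i \<tau>)\<^sup>2) summable_on I" using Hr2_summ' UH by simp
next
  fix \<tau>0 :: real and \<epsilon> :: real assume t0: "\<tau>0 \<in> {0..T}" and ep: "\<epsilon> > 0"
  have t00: "0 \<le> \<tau>0" using t0 by simp
  obtain \<delta> where \<delta>: "\<delta> > 0" "\<And>x. x \<in> {0..} \<Longrightarrow> 0 < dist x \<tau>0 \<Longrightarrow> dist x \<tau>0 < \<delta> \<Longrightarrow>
      dist (nrm_r M I e lam 2 (U x - U \<tau>0)) 0 < sqrt \<epsilon>"
    using Ucont[OF t00] ep unfolding Lim_within by (meson real_sqrt_gt_zero)
  show "\<exists>\<delta>>0. \<forall>\<tau>\<in>{0..T}. dist \<tau> \<tau>0 < \<delta> \<longrightarrow> (\<forall>F. finite F \<and> F \<subseteq> I \<longrightarrow>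
      (\<Sum>i\<in>F. (sqrt (lam i) * c i \<tau> - sqrt (lam i) * c i \<tau>0)\<^sup>2) \<le> \<epsilon>)"
  proof (intro exI[of _ \<delta>] conjI ballI allI impI \<delta>(1))
    fix \<tau> F assume tK: "\<tau> \<in> {0..T}" and dt: "dist \<tau> \<tau>0 < \<delta>" and F: "finite F \<and> F \<subseteq> I"
    show "(\<Sum>i\<in>F. (sqrt (lam i) * c i \<tau> - sqrt (lam i) * c i \<tau>0)\<^sup>2) \<le> \<epsilon>"
    proof (cases "\<tau> = \<tau>0")
      case True thus ?thesis using ep by simp
    next
      case False
      have t0': "0 \<le> \<tau>" using tK by simp
      have D: "U \<tau> - U \<tau>0 \<in> Hr M I e lam 2" using Hr2_diff UH t0' t00 by blast
      have "(\<Sum>i\<in>F. (sqrt (lam i) * c i \<tau> - sqrt (lam i) * c i \<tau>0)\<^sup>2)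
          = (\<Sum>i\<in>F. lam i * (coef M e (U \<tau> - U \<tau>0) i)\<^sup>2)"
      proof (rule sum.cong)
        fix i assume "i \<in> F"
        hence i: "i \<in> I" using F by auto
        have "(sqrt (lam i) * c i \<tau> - sqrt (lam i) * c i \<tau>0)\<^sup>2 = (sqrt (lam i) * (c i \<tau> - c i \<tau>0))\<^sup>2"
          by (simp add: right_diff_distrib)
        also have "\<dots> = (sqrt (lam i))\<^sup>2 * (c i \<tau> - c i \<tau>0)\<^sup>2" by (rule power_mult_distrib)
        also have "\<dots> = lam i * (coef M e (U \<tau> - U \<tau>0) i)\<^sup>2"
          using lam_pos[OF i] coef_diff'[OF UL[OF t0'] UL[OF t00] i] by simp
        finally show "(sqrt (lam i) * c i \<tau> - sqrt (lam i) * c i \<tau>0)\<^sup>2 = lam i * (coef M e (U \<tau> - U \<tau>0) i)\<^sup>2" .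
      qed simp
      also have "\<dots> \<le> Q2 (U \<tau> - U \<tau>0)" unfolding Q2_def
        using F lam_pos by (intro finite_sum_le_infsum Hr2_summ[OF D]) (auto simp: less_imp_le)
      also have "\<dots> = (nrm_r M I e lam 2 (U \<tau> - U \<tau>0))\<^sup>2" by (simp add: nrm_r2_sq)
      also have "\<dots> \<le> (sqrt \<epsilon>)\<^sup>2"
      proof -
        have "nrm_r M I e lam 2 (U \<tau> - U \<tau>0) < sqrt \<epsilon>" using \<delta>(2)[of \<tau>] t0' False dt by simp
        moreover have "0 \<le> nrm_r M I e lam 2 (U \<tau> - U \<tau>0)" by (simp add: nrm_r2 Q2_nonneg)
        ultimately show ?thesis by (intro power_mono) auto
      qed
      also have "\<dots> = \<epsilon>" using ep by simp
      finally show ?thesis .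
    qed
  qed
qed

lemma tl_d: "utail I {0..T} (\<lambda>i \<tau>. (d i \<tau>)\<^sup>2) \<and> ubnd I {0..T} (\<lambda>i \<tau>. (d i \<tau>)\<^sup>2)"
proof (rule utail_cont[OF compact_Icc])
  fix \<tau> assume "\<tau> \<in> {0..T}"
  thus "(\<lambda>i. (d i \<tau>)\<^sup>2) summable_on I" using pars VL has_sum_imp_summable by fastforce
next
  fix \<tau>0 :: real and \<epsilon> :: real assume t0: "\<tau>0 \<in> {0..T}" and ep: "\<epsilon> > 0"
  have t00: "0 \<le> \<tau>0" using t0 by simp
  obtain \<delta> where \<delta>: "\<delta> > 0" "\<And>x. x \<in> {0..} \<Longrightarrow> 0 < dist x \<tau>0 \<Longrightarrow> dist x \<tau>0 < \<delta> \<Longrightarrow>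
      dist (nrm M (V x - V \<tau>0)) 0 < sqrt \<epsilon>"
    using Vcont[OF t00] ep unfolding Lim_within by (meson real_sqrt_gt_zero)
  show "\<exists>\<delta>>0. \<forall>\<tau>\<in>{0..T}. dist \<tau> \<tau>0 < \<delta> \<longrightarrow> (\<forall>F. finite F \<and> F \<subseteq> I \<longrightarrow>
      (\<Sum>i\<in>F. (d i \<tau> - d i \<tau>0)\<^sup>2) \<le> \<epsilon>)"
  proof (intro exI[of _ \<delta>] conjI ballI allI impI \<delta>(1))
    fix \<tau> F assume tK: "\<tau> \<in> {0..T}" and dt: "dist \<tau> \<tau>0 < \<delta>" and F: "finite F \<and> F \<subseteq> I"
    show "(\<Sum>i\<in>F. (d i \<tau> - d i \<tau>0)\<^sup>2) \<le> \<epsilon>"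
    proof (cases "\<tau> = \<tau>0")
      case True thus ?thesis using ep by simp
    next
      case False
      have t0': "0 \<le> \<tau>" using tK by simp
      have D: "V \<tau> - V \<tau>0 \<in> L2 M" using L2_diff' VL t0' t00 by blast
      have "(\<Sum>i\<in>F. (d i \<tau> - d i \<tau>0)\<^sup>2) = (\<Sum>i\<in>F. (coef M e (V \<tau> - V \<tau>0) i)\<^sup>2)"
        using F coef_diff'[OF VL[OF t0'] VL[OF t00]] by (intro sum.cong) auto
      also have "\<dots> \<le> ip M (V \<tau> - V \<tau>0) (V \<tau> - V \<tau>0)"
        using F by (intro finite_sum_le_has_sum[OF pars[OF D]]) auto
      also have "\<dots> = (nrm M (V \<tau> - V \<tau>0))\<^sup>2" by (simp add: nrm_sq)
      also have "\<dots> \<le> (sqrt \<epsilon>)\<^sup>2"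
      proof -
        have "nrm M (V \<tau> - V \<tau>0) < sqrt \<epsilon>" using \<delta>(2)[of \<tau>] t0' False dt by simp
        thus ?thesis using nrm_nonneg by (intro power_mono) auto
      qed
      also have "\<dots> = \<epsilon>" using ep by simp
      finally show ?thesis .
    qed
  qed
qed

lemma sq_lam_c: "i \<in> I \<Longrightarrow> (sqrt (lam i) * x)\<^sup>2 = lam i * x\<^sup>2"
  using lam_pos by (simp add: power_mult_distrib less_imp_le)

lemma tl_c: "utail I {0..T} (\<lambda>i \<tau>. (c i \<tau>)\<^sup>2) \<and> ubnd I {0..T} (\<lambda>i \<tau>. (c i \<tau>)\<^sup>2)"
proof
  show "utail I {0..T} (\<lambda>i \<tau>. (c i \<tau>)\<^sup>2)"
    by (rule utail_dom[OF conjunct1[OF tl_a] _, of "1/lm"]) (use lm(1) one_le sq_lam_c in auto)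
  show "ubnd I {0..T} (\<lambda>i \<tau>. (c i \<tau>)\<^sup>2)"
    by (rule ubnd_dom[OF conjunct2[OF tl_a] _, of "1/lm"]) (use lm(1) one_le sq_lam_c in auto)
qed

lemma Q2_bnd: "\<exists>B. \<forall>\<tau>\<in>{0..T}. Q2 (U \<tau>) \<le> B"
proof -
  obtain B where B: "\<And>\<tau> F. \<tau> \<in> {0..T} \<Longrightarrow> finite F \<and> F \<subseteq> I \<Longrightarrow> (\<Sum>i\<in>F. (sqrt (lam i) * c i \<tau>)\<^sup>2) \<le> B"
    using conjunct2[OF tl_a[of T]] unfolding ubnd_def by blast
  have "Q2 (U \<tau>) \<le> B" if t: "\<tau> \<in> {0..T}" for \<tau>
  proof -
    have t0: "0 \<le> \<tau>" using t by simp
    have hs: "((\<lambda>i. lam i * (c i \<tau>)\<^sup>2) has_sum Q2 (U \<tau>)) I" by (rule Q2_hs[OF UH[OF t0]])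
    have fs: "(\<Sum>i\<in>F. lam i * (c i \<tau>)\<^sup>2) \<le> B" if F: "finite F" "F \<subseteq> I" for F
    proof -
      have "(\<Sum>i\<in>F. lam i * (c i \<tau>)\<^sup>2) = (\<Sum>i\<in>F. (sqrt (lam i) * c i \<tau>)\<^sup>2)"
        using F(2) by (intro sum.cong refl) (simp add: sq_lam_c subset_iff)
      also have "\<dots> \<le> B" using B[OF t] F by blast
      finally show ?thesis .
    qed
    show ?thesis using has_sum_le_finite_sums[OF hs fs] by blast
  qed
  thus ?thesis by blast
qed

lemma N1_bnd: "\<exists>C. \<forall>\<tau>\<in>{0..T}. \<bar>Q1 (U \<tau>)\<bar> \<le> C"
proof -
  obtain B where B: "\<And>\<tau>. \<tau> \<in> {0..T} \<Longrightarrow> Q2 (U \<tau>) \<le> B" using Q2_bnd[of T] by blast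
  have "\<bar>Q1 (U \<tau>)\<bar> \<le> B / sqrt lm" if t: "\<tau> \<in> {0..T}" for \<tau>
  proof -
    have "Q1 (U \<tau>) \<le> Q2 (U \<tau>) / sqrt lm" using Q1_le UH t by simp
    also have "\<dots> \<le> B / sqrt lm" using B[OF t] lm(1) by (simp add: divide_right_mono)
    finally show ?thesis using Q1_nonneg by simp
  qed
  thus ?thesis by blast
qed

lemma tl_q: "ubnd I {0..T} (\<lambda>i \<tau>. (q i \<tau>)\<^sup>2)"
proof -
  obtain B where B: "\<And>\<tau>. \<tau> \<in> {0..T} \<Longrightarrow> Q2 (U \<tau>) \<le> B" using Q2_bnd[of T] by blast
  show ?thesis unfolding ubnd_def
  proof (intro exI[of _ "B / lm"] ballI allI impI)
    fix \<tau> F assume t: "\<tau> \<in> {0..T}" and F: "finite F \<and> F \<subseteq> I"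
    have t0: "0 \<le> \<tau>" using t by simp
    have "(\<Sum>i\<in>F. (q i \<tau>)\<^sup>2) \<le> ip M (pospart (U \<tau>)) (pospart (U \<tau>))"
      using F by (intro finite_sum_le_has_sum[OF pars[OF PL[OF t0]]]) auto
    also have "\<dots> \<le> ip M (U \<tau>) (U \<tau>)" by (rule ip_pos_le[OF UL[OF t0]])
    also have "\<dots> \<le> Q2 (U \<tau>) / lm" by (rule ip_le_Q2[OF UH[OF t0]])
    also have "\<dots> \<le> B / lm" using B[OF t] lm(1) by (simp add: divide_right_mono)
    finally show "(\<Sum>i\<in>F. (q i \<tau>)\<^sup>2) \<le> B / lm" .
  qed
qed

end


context traj begin

definition W where "W t = infsum (\<lambda>i. sqrt (lam i) * c i t * d i t) I"

lemma sum_d: "0 \<le> t \<Longrightarrow> (\<lambda>i. (d i t)\<^sup>2) summable_on I"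
  using has_sum_imp_summable[OF pars[OF VL]] by simp

lemma hs_W: assumes t: "0 \<le> t" shows "((\<lambda>i. sqrt (lam i) * c i t * d i t) has_sum W t) I"
proof -
  have "(\<lambda>i. (sqrt (lam i) * c i t) * d i t) summable_on I"
    by (rule prod_summable[OF Hr2_summ'[OF UH[OF t]] sum_d[OF t]])
  thus ?thesis unfolding W_def by simp
qed

lemma hs_dd: "0 \<le> t \<Longrightarrow> ((\<lambda>i. (d i t)\<^sup>2) has_sum ip M (V t) (V t)) I"
  using pars[OF VL] by simp

lemma hs_dq: "0 \<le> t \<Longrightarrow> 0 \<le> s \<Longrightarrow> ((\<lambda>i. d i s * q i t) has_sum ip M (V s) (pospart (U t))) I"
  using pars_ip[OF VL PL] by simp

lemma hs_df: "0 \<le> t \<Longrightarrow> ((\<lambda>i. d i t * fc i) has_sum ip M (V t) f) I"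
  using pars_ip[OF VL fL] by simp

lemma sum_fc: "(\<lambda>i. (fc i)\<^sup>2) summable_on I"
  using has_sum_imp_summable[OF pars[OF fL]] by simp

lemma ut_W: "utail I {0..T} (\<lambda>i \<tau>. sqrt (lam i) * c i \<tau> * d i \<tau>)"
  by (rule utail_cong[OF utail_cs[OF conjunct1[OF tl_d[of T]] conjunct2[OF tl_a[of T]]]]) simp

lemma ut_dq: "utail I {0..T} (\<lambda>i \<tau>. d i \<tau> * q i \<tau>)"
  by (rule utail_cs[OF conjunct1[OF tl_d[of T]] tl_q[of T]])

lemma ut_df: "utail I {0..T} (\<lambda>i \<tau>. d i \<tau> * fc i)"
  by (rule utail_cs[OF conjunct1[OF tl_d[of T]] ubnd_const[OF sum_fc]])

lemma D1: assumes t: "0 \<le> t"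
  shows "((\<lambda>s. Q2 (U s) + ip M (V s) (V s)) has_real_derivative
     ((-2) * ip M (V t) (V t) + 2 * (p - Q1 (U t)) * W t + (-2 * k\<^sup>2) * ip M (V t) (pospart (U t)) + 2 * ip M (V t) f))
     (at t within {0..})"
proof (rule series_deriv[where a = "\<lambda>i s. lam i * (c i s)\<^sup>2 + (d i s)\<^sup>2"
      and a' = "\<lambda>i s. (-2) * (d i s)\<^sup>2 + 2 * (p - Q1 (U s)) * (sqrt (lam i) * c i s * d i s)
                 + (-2 * k\<^sup>2) * (d i s * q i s) + 2 * (d i s * fc i)" and I = I, OF _ _ _ _ t])
  fix i \<tau> assume i: "i \<in> I" and t0: "0 \<le> (\<tau>::real)"
  have "((\<lambda>s. lam i * (c i s)\<^sup>2 + (d i s)\<^sup>2) has_real_derivative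
      (lam i * (2 * c i \<tau> * d i \<tau>) + 2 * d i \<tau> * G i \<tau>)) (at \<tau> within {0..})"
    using dc[OF i t0] dd[OF i t0] by (auto intro!: derivative_eq_intros)
  moreover have "lam i * (2 * c i \<tau> * d i \<tau>) + 2 * d i \<tau> * G i \<tau> =
      (-2) * (d i \<tau>)\<^sup>2 + 2 * (p - Q1 (U \<tau>)) * (sqrt (lam i) * c i \<tau> * d i \<tau>)
                 + (-2 * k\<^sup>2) * (d i \<tau> * q i \<tau>) + 2 * (d i \<tau> * fc i)"
    unfolding G_def nrm_r1_sq by (simp add: power2_eq_square algebra_simps)
  ultimately show "((\<lambda>s. lam i * (c i s)\<^sup>2 + (d i s)\<^sup>2) has_real_derivative
      (-2) * (d i \<tau>)\<^sup>2 + 2 * (p - Q1 (U \<tau>)) * (sqrt (lam i) * c i \<tau> * d i \<tau>)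
                 + (-2 * k\<^sup>2) * (d i \<tau> * q i \<tau>) + 2 * (d i \<tau> * fc i)) (at \<tau> within {0..})"
    by simp
next
  fix \<tau> :: real assume t0: "0 \<le> \<tau>"
  show "((\<lambda>i. lam i * (c i \<tau>)\<^sup>2 + (d i \<tau>)\<^sup>2) has_sum Q2 (U \<tau>) + ip M (V \<tau>) (V \<tau>)) I"
    by (rule has_sum_add[OF Q2_hs[OF UH[OF t0]] hs_dd[OF t0]])
next
  fix \<tau> :: real assume t0: "0 \<le> \<tau>"
  show "((\<lambda>i. (-2) * (d i \<tau>)\<^sup>2 + 2 * (p - Q1 (U \<tau>)) * (sqrt (lam i) * c i \<tau> * d i \<tau>)
                 + (-2 * k\<^sup>2) * (d i \<tau> * q i \<tau>) + 2 * (d i \<tau> * fc i)) has_sum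
     ((-2) * ip M (V \<tau>) (V \<tau>) + 2 * (p - Q1 (U \<tau>)) * W \<tau> + (-2 * k\<^sup>2) * ip M (V \<tau>) (pospart (U \<tau>)) + 2 * ip M (V \<tau>) f)) I"
    by (intro has_sum_add has_sum_cmult_right hs_dd hs_W hs_dq hs_df t0)
next
  fix T :: real
  obtain C where C: "\<And>\<tau>. \<tau> \<in> {0..T} \<Longrightarrow> \<bar>Q1 (U \<tau>)\<bar> \<le> C" using N1_bnd[of T] by blast
  have u1: "utail I {0..T} (\<lambda>i \<tau>. (-2) * (d i \<tau>)\<^sup>2)"
    by (rule utail_mult[OF conjunct1[OF tl_d[of T]], of "\<lambda>_. -2" 2]) simp
  have u2: "utail I {0..T} (\<lambda>i \<tau>. (2 * (p - Q1 (U \<tau>))) * (sqrt (lam i) * c i \<tau> * d i \<tau>))"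
  proof (rule utail_mult[OF ut_W[of T], of _ "2 * (\<bar>p\<bar> + C)"])
    fix \<tau> assume "\<tau> \<in> {0..T}"
    thus "\<bar>2 * (p - Q1 (U \<tau>))\<bar> \<le> 2 * (\<bar>p\<bar> + C)" using C[of \<tau>] by (simp add: abs_mult)
  qed
  have u3: "utail I {0..T} (\<lambda>i \<tau>. (-2 * k\<^sup>2) * (d i \<tau> * q i \<tau>))"
    by (rule utail_mult[OF ut_dq[of T], of "\<lambda>_. -2 * k\<^sup>2" "2 * k\<^sup>2"]) (simp add: abs_mult)
  have u4: "utail I {0..T} (\<lambda>i \<tau>. 2 * (d i \<tau> * fc i))"
    by (rule utail_mult[OF ut_df[of T], of "\<lambda>_. 2" 2]) simp
  show "utail I {0..T} (\<lambda>i s. (-2) * (d i s)\<^sup>2 + 2 * (p - Q1 (U s)) * (sqrt (lam i) * c i s * d i s)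
                 + (-2 * k\<^sup>2) * (d i s * q i s) + 2 * (d i s * fc i))"
    using utail_add[OF utail_add[OF utail_add[OF u1 u2] u3] u4] by simp
qed

lemma D2: assumes t: "0 \<le> t"
  shows "((\<lambda>s. Q1 (U s)) has_real_derivative 2 * W t) (at t within {0..})"
proof (rule series_deriv[where a = "\<lambda>i s. sqrt (lam i) * (c i s)\<^sup>2"
      and a' = "\<lambda>i s. 2 * (sqrt (lam i) * c i s * d i s)" and I = I, OF _ _ _ _ t])
  fix i \<tau> assume i: "i \<in> I" and t0: "0 \<le> (\<tau>::real)"
  show "((\<lambda>s. sqrt (lam i) * (c i s)\<^sup>2) has_real_derivative 2 * (sqrt (lam i) * c i \<tau> * d i \<tau>)) (at \<tau> within {0..})"
    using dc[OF i t0] by (auto intro!: derivative_eq_intros)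
next
  fix \<tau> :: real assume t0: "0 \<le> \<tau>"
  show "((\<lambda>i. sqrt (lam i) * (c i \<tau>)\<^sup>2) has_sum Q1 (U \<tau>)) I"
    unfolding Q1_def using Q1_summ[OF UH[OF t0]] by simp
next
  fix \<tau> :: real assume t0: "0 \<le> \<tau>"
  show "((\<lambda>i. 2 * (sqrt (lam i) * c i \<tau> * d i \<tau>)) has_sum 2 * W \<tau>) I"
    by (rule has_sum_cmult_right[OF hs_W[OF t0]])
next
  fix T :: real
  show "utail I {0..T} (\<lambda>i s. 2 * (sqrt (lam i) * c i s * d i s))"
    by (rule utail_mult[OF ut_W[of T], of "\<lambda>_. 2" 2]) simp
qed

lemma D3: assumes t: "0 \<le> t"
  shows "((\<lambda>s. ip M (U s) f) has_real_derivative ip M (V t) f) (at t within {0..})"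
proof (rule series_deriv[where a = "\<lambda>i s. c i s * fc i"
      and a' = "\<lambda>i s. d i s * fc i" and I = I, OF _ _ _ _ t])
  fix i \<tau> assume i: "i \<in> I" and t0: "0 \<le> (\<tau>::real)"
  show "((\<lambda>s. c i s * fc i) has_real_derivative d i \<tau> * fc i) (at \<tau> within {0..})"
    using dc[OF i t0] by (auto intro!: derivative_eq_intros)
next
  fix \<tau> :: real assume t0: "0 \<le> \<tau>"
  show "((\<lambda>i. c i \<tau> * fc i) has_sum ip M (U \<tau>) f) I" by (rule pars_ip[OF UL[OF t0] fL])
next
  fix \<tau> :: real assume t0: "0 \<le> \<tau>"
  show "((\<lambda>i. d i \<tau> * fc i) has_sum ip M (V \<tau>) f) I" by (rule hs_df[OF t0])
next
  fix T :: real show "utail I {0..T} (\<lambda>i s. d i s * fc i)" by (rule ut_df)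
qed

end


context traj begin

lemma DG: assumes t: "0 \<le> t" and s: "0 \<le> s"
  shows "((\<lambda>r. ip M (U r) (pospart (U t))) has_real_derivative ip M (V s) (pospart (U t))) (at s within {0..})"
proof (rule series_deriv[where a = "\<lambda>i r. c i r * q i t"
      and a' = "\<lambda>i r. d i r * q i t" and I = I, OF _ _ _ _ s])
  fix i \<tau> assume i: "i \<in> I" and t0: "0 \<le> (\<tau>::real)"
  show "((\<lambda>r. c i r * q i t) has_real_derivative d i \<tau> * q i t) (at \<tau> within {0..})"
    using dc[OF i t0] by (auto intro!: derivative_eq_intros)
next
  fix \<tau> :: real assume t0: "0 \<le> \<tau>"
  show "((\<lambda>i. c i \<tau> * q i t) has_sum ip M (U \<tau>) (pospart (U t))) I" by (rule pars_ip[OF UL[OF t0] PL[OF t]])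
next
  fix \<tau> :: real assume t0: "0 \<le> \<tau>"
  show "((\<lambda>i. d i \<tau> * q i t) has_sum ip M (V \<tau>) (pospart (U t))) I" by (rule hs_dq[OF t t0])
next
  fix T :: real
  have "(\<lambda>i. (q i t)\<^sup>2) summable_on I" using has_sum_imp_summable[OF pars[OF PL[OF t]]] by simp
  thus "utail I {0..T} (\<lambda>i r. d i r * q i t)"
    by (rule utail_cs[OF conjunct1[OF tl_d[of T]] ubnd_const])
qed

lemma DH: assumes t: "0 \<le> t"
  shows "((\<lambda>r. ip M (U r - U t) (U r - U t)) has_real_derivative 0) (at t within {0..})"
proof -
  define H' where "H' r = infsum (\<lambda>i. 2 * ((c i r - c i t) * d i r)) I" for r
  have sq: "((\<lambda>i. (c i r - c i t)\<^sup>2) has_sum ip M (U r - U t) (U r - U t)) I" if r: "0 \<le> r" for r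
  proof -
    have "((\<lambda>i. (coef M e (U r - U t) i)\<^sup>2) has_sum ip M (U r - U t) (U r - U t)) I"
      by (rule pars[OF L2_diff'[OF UL[OF r] UL[OF t]]])
    thus ?thesis using coef_diff'[OF UL[OF r] UL[OF t]] by (subst (asm) has_sum_cong) auto
  qed
  have "((\<lambda>r. ip M (U r - U t) (U r - U t)) has_real_derivative H' t) (at t within {0..})"
  proof (rule series_deriv[where a = "\<lambda>i r. (c i r - c i t)\<^sup>2"
        and a' = "\<lambda>i r. 2 * ((c i r - c i t) * d i r)" and I = I, OF _ _ _ _ t])
    fix i \<tau> assume i: "i \<in> I" and t0: "0 \<le> (\<tau>::real)"
    show "((\<lambda>r. (c i r - c i t)\<^sup>2) has_real_derivative 2 * ((c i \<tau> - c i t) * d i \<tau>)) (at \<tau> within {0..})"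
      using dc[OF i t0] by (auto intro!: derivative_eq_intros)
  next
    fix \<tau> :: real assume t0: "0 \<le> \<tau>"
    show "((\<lambda>i. (c i \<tau> - c i t)\<^sup>2) has_sum ip M (U \<tau> - U t) (U \<tau> - U t)) I" by (rule sq[OF t0])
  next
    fix \<tau> :: real assume t0: "0 \<le> \<tau>"
    have "(\<lambda>i. (c i \<tau> - c i t) * d i \<tau>) summable_on I"
      by (rule prod_summable[OF has_sum_imp_summable[OF sq[OF t0]] sum_d[OF t0]])
    hence "(\<lambda>i. 2 * ((c i \<tau> - c i t) * d i \<tau>)) summable_on I" by (rule summable_on_cmult_right)
    thus "((\<lambda>i. 2 * ((c i \<tau> - c i t) * d i \<tau>)) has_sum H' \<tau>) I" unfolding H'_def by simp
  next
    fix T :: real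
    have bc: "ubnd I {0..T} (\<lambda>i \<tau>. (c i \<tau>)\<^sup>2 + (c i t)\<^sup>2)"
    proof (rule ubnd_add[OF conjunct2[OF tl_c[of T]] ubnd_const])
      show "(\<lambda>i. (c i t)\<^sup>2) summable_on I" using has_sum_imp_summable[OF pars[OF UL[OF t]]] by simp
    qed
    have b2: "ubnd I {0..T} (\<lambda>i \<tau>. (c i \<tau> - c i t)\<^sup>2)"
    proof (rule ubnd_dom[OF bc, of 2])
      fix i \<tau>
      have "2 * ((c i \<tau>)\<^sup>2 + (c i t)\<^sup>2) - (c i \<tau> - c i t)\<^sup>2 = (c i \<tau> + c i t)\<^sup>2"
        by (simp add: power2_eq_square algebra_simps)
      thus "(c i \<tau> - c i t)\<^sup>2 \<le> 2 * ((c i \<tau>)\<^sup>2 + (c i t)\<^sup>2)"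
        using zero_le_power2[of "c i \<tau> + c i t"] by linarith
    qed simp
    have "utail I {0..T} (\<lambda>i \<tau>. 2 * (d i \<tau> * (c i \<tau> - c i t)))"
      by (rule utail_mult[OF utail_cs[OF conjunct1[OF tl_d[of T]] b2], of "\<lambda>_. 2" 2]) simp
    thus "utail I {0..T} (\<lambda>i r. 2 * ((c i r - c i t) * d i r))"
      by (rule utail_cong) (simp add: algebra_simps)
  qed
  moreover have "H' t = 0" unfolding H'_def by simp
  ultimately show ?thesis by simp
qed

lemma D4: assumes t: "0 \<le> t"
  shows "((\<lambda>s. ip M (pospart (U s)) (pospart (U s))) has_real_derivative 2 * ip M (V t) (pospart (U t))) (at t within {0..})"
proof -
  define P where "P s = ip M (pospart (U s)) (pospart (U s))" for s
  define Gt where "Gt s = ip M (U s) (pospart (U t))" for s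
  define R where "R s = P s - P t - 2 * (Gt s - Gt t)" for s
  define H where "H s = ip M (U s - U t) (U s - U t)" for s
  have R0: "((\<lambda>s. R s) has_real_derivative 0) (at t within {0..})"
  proof (rule deriv_squeeze0[where H = H])
    show "(H has_real_derivative 0) (at t within {0..})" unfolding H_def by (rule DH[OF t])
    show "H t = 0" unfolding H_def by (simp add: ip_def fun_diff_def)
    show "R t = 0" unfolding R_def by simp
    fix s :: real assume "s \<in> {0..}"
    hence s: "0 \<le> s" by simp
    have "0 \<le> R s \<and> R s \<le> H s"
      using pos_rem[OF UL[OF s] UL[OF t]] unfolding R_def P_def Gt_def H_def by simp
    thus "\<bar>R s\<bar> \<le> H s" by simp
  qed
  have g1: "((\<lambda>s. Gt s - Gt t) has_real_derivative ip M (V t) (pospart (U t)) - 0) (at t within {0..})"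
    unfolding Gt_def by (rule DERIV_diff[OF DG[OF t t] DERIV_const])
  have "((\<lambda>s. R s + P t + 2 * (Gt s - Gt t)) has_real_derivative 0 + 0 + 2 * (ip M (V t) (pospart (U t)) - 0)) (at t within {0..})"
    by (rule DERIV_add[OF DERIV_add[OF R0 DERIV_const] DERIV_cmult[OF g1]])
  moreover have "(\<lambda>s. R s + P t + 2 * (Gt s - Gt t)) = P" unfolding R_def by auto
  ultimately show ?thesis unfolding P_def by simp
qed

lemma Lderiv: assumes t: "0 \<le> t"
  shows "((\<lambda>s. Q2 (U s) + ip M (V s) (V s) + 1/2 * (Q1 (U s) - p)\<^sup>2
           + k\<^sup>2 * ip M (pospart (U s)) (pospart (U s)) - 2 * ip M (U s) f)
        has_real_derivative (-2 * ip M (V t) (V t))) (at t within {0..})"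
proof -
  have "((\<lambda>s. Q2 (U s) + ip M (V s) (V s) + 1/2 * (Q1 (U s) - p)\<^sup>2
           + k\<^sup>2 * ip M (pospart (U s)) (pospart (U s)) - 2 * ip M (U s) f)
        has_real_derivative
        ((-2) * ip M (V t) (V t) + 2 * (p - Q1 (U t)) * W t + (-2 * k\<^sup>2) * ip M (V t) (pospart (U t)) + 2 * ip M (V t) f)
        + 1/2 * (2 * (Q1 (U t) - p) * (2 * W t - 0))
        + k\<^sup>2 * (2 * ip M (V t) (pospart (U t))) - 2 * ip M (V t) f) (at t within {0..})"
  proof -
    have h2: "((\<lambda>s. Q1 (U s) - p) has_real_derivative 2 * W t - 0) (at t within {0..})"
      by (rule DERIV_diff[OF D2[OF t] DERIV_const])
    have h3: "((\<lambda>s. (Q1 (U s) - p)\<^sup>2) has_real_derivative of_nat 2 * ((2 * W t - 0) * (Q1 (U t) - p) ^ (2 - Suc 0))) (at t within {0..})"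
      by (rule DERIV_power[OF h2])
    have h4: "((\<lambda>s. 1/2 * (Q1 (U s) - p)\<^sup>2) has_real_derivative 1/2 * (2 * (Q1 (U t) - p) * (2 * W t - 0))) (at t within {0..})"
      using DERIV_cmult[OF h3, of "1/2"] by (simp add: algebra_simps)
    show ?thesis
      by (rule DERIV_diff[OF DERIV_add[OF DERIV_add[OF D1[OF t] h4] DERIV_cmult[OF D4[OF t]]] DERIV_cmult[OF D3[OF t]]])
  qed
  moreover have "((-2) * ip M (V t) (V t) + 2 * (p - Q1 (U t)) * W t + (-2 * k\<^sup>2) * ip M (V t) (pospart (U t)) + 2 * ip M (V t) f)
        + 1/2 * (2 * (Q1 (U t) - p) * (2 * W t - 0))
        + k\<^sup>2 * (2 * ip M (V t) (pospart (U t))) - 2 * ip M (V t) f = -2 * ip M (V t) (V t)"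
    by (simp add: algebra_simps)
  ultimately show ?thesis by (rule DERIV_cong)
qed

end


lemma wQ_diff: fixes w x y :: "nat \<Rightarrow> real"
  assumes w: "\<And>i. i \<in> I \<Longrightarrow> 0 \<le> w i"
    and sx: "(\<lambda>i. w i * (x i)\<^sup>2) summable_on I" and sy: "(\<lambda>i. w i * (y i)\<^sup>2) summable_on I"
  shows "\<bar>infsum (\<lambda>i. w i * (y i + x i)\<^sup>2) I - infsum (\<lambda>i. w i * (y i)\<^sup>2) I\<bar> \<le>
     infsum (\<lambda>i. w i * (x i)\<^sup>2) I + 2 * (sqrt (infsum (\<lambda>i. w i * (y i)\<^sup>2) I) * sqrt (infsum (\<lambda>i. w i * (x i)\<^sup>2) I))"
proof -
  have sp: "(\<lambda>i. w i * y i * x i) summable_on I" by (rule wsum_summable[OF w sy sx])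
  have s2: "(\<lambda>i. 2 * (w i * y i * x i)) summable_on I" by (rule summable_on_cmult_right[OF sp])
  have e: "(\<lambda>i. w i * (y i + x i)\<^sup>2) = (\<lambda>i. (w i * (y i)\<^sup>2 + 2 * (w i * y i * x i)) + w i * (x i)\<^sup>2)"
    by (auto simp: power2_eq_square algebra_simps)
  have "infsum (\<lambda>i. w i * (y i + x i)\<^sup>2) I =
      infsum (\<lambda>i. w i * (y i)\<^sup>2) I + 2 * infsum (\<lambda>i. w i * y i * x i) I + infsum (\<lambda>i. w i * (x i)\<^sup>2) I"
    unfolding e using infsum_add[OF summable_on_add[OF sy s2] sx] infsum_add[OF sy s2]
      infsum_cmult_right'[of 2 "\<lambda>i. w i * y i * x i" I] by simp
  moreover have "\<bar>infsum (\<lambda>i. w i * y i * x i) I\<bar> \<le> sqrt (infsum (\<lambda>i. w i * (y i)\<^sup>2) I) * sqrt (infsum (\<lambda>i. w i * (x i)\<^sup>2) I)"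
    by (rule wsum_cs[OF w sy sx])
  moreover have "0 \<le> infsum (\<lambda>i. w i * (x i)\<^sup>2) I" using w by (intro infsum_nonneg mult_nonneg_nonneg) auto
  ultimately show ?thesis by (simp add: abs_le_iff)
qed

lemma ip_diff_bnd: assumes u: "u \<in> L2 M" and u': "u' \<in> L2 M"
  shows "\<bar>ip M u' u' - ip M u u\<bar> \<le> ip M (u' - u) (u' - u) + 2 * (sqrt (ip M u u) * sqrt (ip M (u' - u) (u' - u)))"
proof -
  define x where "x = u' - u"
  have xL: "x \<in> L2 M" unfolding x_def by (rule L2_diff'[OF u' u])
  have u'e: "u' = (\<lambda>t. u t + x t)" unfolding x_def by auto
  have "ip M u' u' = ip M u u + 2 * ip M u x + ip M x x"
  proof -
    have "ip M u' u' = ip M u u' + ip M x u'" unfolding u'e by (rule ip_add_left[OF u xL L2_add[OF u xL]])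
    also have "ip M u u' = ip M u u + ip M x u"
      using ip_add_left[OF u xL u] ip_sym[of M u u'] unfolding u'e by simp
    also have "ip M x u' = ip M u x + ip M x x"
      using ip_add_left[OF u xL xL] ip_sym[of M x u'] unfolding u'e by simp
    finally show ?thesis using ip_sym[of M x u] by simp
  qed
  moreover have "\<bar>ip M u x\<bar> \<le> sqrt (ip M u u) * sqrt (ip M x x)" using ip_cs[OF u xL] by (simp add: nrm_def)
  moreover have "0 \<le> ip M x x" by (rule ip_self_nonneg)
  ultimately show ?thesis unfolding x_def[symmetric] by (simp add: abs_le_iff)
qed

lemma P_diff_bnd: assumes u: "u \<in> L2 M" and u': "u' \<in> L2 M"
  shows "\<bar>ip M (pospart u') (pospart u') - ip M (pospart u) (pospart u)\<bar> \<le>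
     ip M (u' - u) (u' - u) + 2 * (sqrt (ip M u u) * sqrt (ip M (u' - u) (u' - u)))"
proof -
  have r: "0 \<le> ip M (pospart u') (pospart u') - ip M (pospart u) (pospart u) - 2 * (ip M u' (pospart u) - ip M u (pospart u)) \<and>
     ip M (pospart u') (pospart u') - ip M (pospart u) (pospart u) - 2 * (ip M u' (pospart u) - ip M u (pospart u)) \<le> ip M (u' - u) (u' - u)"
    by (rule pos_rem[OF u' u])
  have e: "ip M u' (pospart u) - ip M u (pospart u) = ip M (u' - u) (pospart u)"
    by (rule ip_diff_left'[OF u' u L2_pospart[OF u], symmetric])
  have "\<bar>ip M (u' - u) (pospart u)\<bar> \<le> nrm M (u' - u) * nrm M (pospart u)"
    by (rule ip_cs[OF L2_diff'[OF u' u] L2_pospart[OF u]])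
  also have "\<dots> \<le> sqrt (ip M (u' - u) (u' - u)) * sqrt (ip M u u)"
    unfolding nrm_def using ip_pos_le[OF u] ip_self_nonneg[of M "u' - u"] by (intro mult_left_mono) auto
  finally have b: "\<bar>ip M (u' - u) (pospart u)\<bar> \<le> sqrt (ip M u u) * sqrt (ip M (u' - u) (u' - u))"
    by (simp add: mult.commute)
  show ?thesis using r e b by (simp add: abs_le_iff)
qed

lemma quad_le: fixes a r A :: real
  assumes "0 \<le> a" "a \<le> r" "r \<le> 1" "0 \<le> A"
  shows "a\<^sup>2 + 2 * (A * a) \<le> r * (1 + 2 * A)"
proof -
  have "a * a \<le> a * 1" using assms by (intro mult_left_mono) auto
  hence "a\<^sup>2 \<le> r" using assms by (simp add: power2_eq_square)
  moreover have "A * a \<le> A * r" using assms by (simp add: mult_left_mono)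
  ultimately show ?thesis by (simp add: algebra_simps)
qed

context sset begin

lemma lyap_eq: "lyap M I e lam p k f z = Q2 (fst z) + ip M (snd z) (snd z) + 1/2 * (Q1 (fst z) - p)\<^sup>2
    + k\<^sup>2 * ip M (pospart (fst z)) (pospart (fst z)) - 2 * ip M (fst z) f"
  unfolding lyap_def energy_def nrm_r2_sq nrm_r1_sq nrm_sq by simp

lemma phase_norm_eq: "phase_norm M I e lam z = sqrt (Q2 (fst z) + ip M (snd z) (snd z))"
  unfolding phase_norm_def nrm_r2_sq nrm_sq by simp

lemma coef_add_diff: "u \<in> L2 M \<Longrightarrow> u' \<in> L2 M \<Longrightarrow> i \<in> I \<Longrightarrow> coef M e u' i = coef M e u i + coef M e (u' - u) i"
  using coef_diff'[of u' u i] by simp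

lemma Q2_diff_bnd: assumes u: "u \<in> Hr M I e lam 2" and u': "u' \<in> Hr M I e lam 2"
  shows "\<bar>Q2 u' - Q2 u\<bar> \<le> Q2 (u' - u) + 2 * (sqrt (Q2 u) * sqrt (Q2 (u' - u)))"
proof -
  have uL: "u \<in> L2 M" and u'L: "u' \<in> L2 M" using u u' Hr2_L2 by auto
  have "Q2 u' = infsum (\<lambda>i. lam i * (coef M e u i + coef M e (u' - u) i)\<^sup>2) I"
    unfolding Q2_def using coef_add_diff[OF uL u'L] by (intro infsum_cong) simp
  thus ?thesis using wQ_diff[of I lam "coef M e (u' - u)" "coef M e u", OF _ Hr2_summ[OF Hr2_diff[OF u' u]] Hr2_summ[OF u]]
    lam_pos unfolding Q2_def by (simp add: less_imp_le)
qed

lemma Q1_diff_bnd: assumes u: "u \<in> Hr M I e lam 2" and u': "u' \<in> Hr M I e lam 2"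
  shows "\<bar>Q1 u' - Q1 u\<bar> \<le> Q1 (u' - u) + 2 * (sqrt (Q1 u) * sqrt (Q1 (u' - u)))"
proof -
  have uL: "u \<in> L2 M" and u'L: "u' \<in> L2 M" using u u' Hr2_L2 by auto
  have "Q1 u' = infsum (\<lambda>i. sqrt (lam i) * (coef M e u i + coef M e (u' - u) i)\<^sup>2) I"
    unfolding Q1_def using coef_add_diff[OF uL u'L] by (intro infsum_cong) simp
  thus ?thesis using wQ_diff[of I "\<lambda>i. sqrt (lam i)" "coef M e (u' - u)" "coef M e u", OF _ Q1_summ[OF Hr2_diff[OF u' u]] Q1_summ[OF u]]
    lam_pos unfolding Q1_def by (simp add: less_imp_le)
qed

end


context sset begin

lemma traj_of: assumes fL: "f \<in> L2 M" and ws: "weak_solution M I e lam p k f U V"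
  shows "traj M I e lam p k f U V"
  unfolding traj_def traj_axioms_def sset_def using spec fL ws by blast

lemma deriv_part:
  assumes fL: "f \<in> L2 M" and ws: "weak_solution M I e lam p k f (\<lambda>t. fst (S t z)) (\<lambda>t. snd (S t z))"
    and t: "0 \<le> t"
  shows "((\<lambda>s. (lyap M I e lam p k f) (S s z)) has_real_derivative (- 2 * (nrm M (snd (S t z)))\<^sup>2)) (at t within {0..})"
proof -
  have tr: "traj M I e lam p k f (\<lambda>t. fst (S t z)) (\<lambda>t. snd (S t z))" by (rule traj_of[OF fL ws])
  have "(\<lambda>s. (lyap M I e lam p k f) (S s z)) = (\<lambda>s. Q2 (fst (S s z)) + ip M (snd (S s z)) (snd (S s z)) + 1/2 * (Q1 (fst (S s z)) - p)\<^sup>2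
           + k\<^sup>2 * ip M (pospart (fst (S s z))) (pospart (fst (S s z))) - 2 * ip M (fst (S s z)) f)"
    by (rule ext) (rule lyap_eq)
  thus ?thesis using traj.Lderiv[OF tr t] by (simp add: nrm_sq)
qed

lemma mono_part:
  assumes fL: "f \<in> L2 M" and ws: "weak_solution M I e lam p k f (\<lambda>t. fst (S t z)) (\<lambda>t. snd (S t z))"
    and st: "0 \<le> s" "s \<le> t"
  shows "(lyap M I e lam p k f) (S t z) \<le> (lyap M I e lam p k f) (S s z)"
proof (rule DERIV_nonpos_imp_decreasing_open[OF st(2)])
  let ?F = "\<lambda>s. (lyap M I e lam p k f) (S s z)"
  fix x assume x: "s < x" "x < t"
  have "x \<in> interior {0..}" using x st by simp
  hence "at x within {0..} = at x" by (rule at_within_interior)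
  hence "DERIV ?F x :> - 2 * (nrm M (snd (S x z)))\<^sup>2" using deriv_part[where S=S and z=z and f=f and p=p and k=k, OF fL ws, of x] x st by simp
  thus "\<exists>y. DERIV ?F x :> y \<and> y \<le> 0" by force
next
  show "continuous_on {s..t} (\<lambda>s. (lyap M I e lam p k f) (S s z))"
    unfolding continuous_on_eq_continuous_within
  proof
    fix x assume x: "x \<in> {s..t}"
    have "continuous (at x within {0..}) (\<lambda>s. (lyap M I e lam p k f) (S s z))"
      using DERIV_continuous[OF deriv_part[where S=S and z=z and f=f and p=p and k=k, OF fL ws, of x]] x st by simp
    thus "continuous (at x within {s..t}) (\<lambda>s. (lyap M I e lam p k f) (S s z))"
      by (rule continuous_within_subset) (use st in auto)
  qed
qed

lemma stat_part:
  assumes fL: "f \<in> L2 M" and ws: "weak_solution M I e lam p k f (\<lambda>t. fst (S t z)) (\<lambda>t. snd (S t z))"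
    and z: "z \<in> phase M I e lam"
    and a0: "AE x in M. fst (S 0 z) x = fst z x" and b0: "AE x in M. snd (S 0 z) x = snd z x"
    and H: "\<forall>t>0. (lyap M I e lam p k f) (S t z) = (lyap M I e lam p k f) z"
  shows "z \<in> stationary_set M I e lam p k f"
proof -
  define U where "U t = fst (S t z)" for t
  define V where "V t = snd (S t z)" for t
  have ws': "weak_solution M I e lam p k f U V" using ws unfolding U_def V_def .
  have tr: "traj M I e lam p k f U V" by (rule traj_of[OF fL ws'])
  have zH: "fst z \<in> Hr M I e lam 2" and zL: "snd z \<in> L2 M" using z by (auto simp: phase_def mem_Times_iff)
  have fzL: "fst z \<in> L2 M" using Hr2_L2[OF zH] .
  have VL: "\<And>t. 0 \<le> t \<Longrightarrow> V t \<in> L2 M" using traj.VL[OF tr] .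
  have UL: "\<And>t. 0 \<le> t \<Longrightarrow> U t \<in> L2 M" using traj.UL[OF tr] .
  have V0: "ip M (V t) (V t) = 0" if t: "t > 0" for t
  proof -
    let ?F = "\<lambda>s. (lyap M I e lam p k f) (S s z)"
    have "t \<in> interior {0..}" using t by simp
    hence "at t within {0..} = at t" by (rule at_within_interior)
    hence d1: "DERIV ?F t :> - 2 * (nrm M (snd (S t z)))\<^sup>2" using deriv_part[where S=S and z=z and f=f and p=p and k=k, OF fL ws, of t] t by simp
    have d2: "DERIV ?F t :> 0"
      by (rule has_field_derivative_transform_within_open[OF DERIV_const[of "(lyap M I e lam p k f) z"], of "{0<..}"])
        (use t H in auto)
    have "- 2 * (nrm M (snd (S t z)))\<^sup>2 = 0" using DERIV_unique[OF d1 d2] .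
    thus ?thesis by (simp add: nrm_sq V_def)
  qed
  have nV0: "nrm M (V 0) = 0"
  proof -
    have eq: "nrm M (V \<tau> - V 0) = nrm M (V 0)" if t: "\<tau> > 0" for \<tau>
    proof -
      have L1: "V \<tau> \<in> L2 M" and L0: "V 0 \<in> L2 M" using VL t by auto
      have "\<bar>ip M (V \<tau>) (V 0)\<bar> \<le> nrm M (V \<tau>) * nrm M (V 0)" by (rule ip_cs[OF L1 L0])
      hence c: "ip M (V \<tau>) (V 0) = 0" using V0[OF t] by (simp add: nrm_def)
      have "ip M (V \<tau> - V 0) (V \<tau> - V 0) = ip M (V \<tau>) (V \<tau> - V 0) - ip M (V 0) (V \<tau> - V 0)"
        by (rule ip_diff_left'[OF L1 L0 L2_diff'[OF L1 L0]])
      also have "ip M (V \<tau>) (V \<tau> - V 0) = ip M (V \<tau>) (V \<tau>) - ip M (V 0) (V \<tau>)"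
        using ip_diff_left'[OF L1 L0 L1] ip_sym[of M "V \<tau>" "V \<tau> - V 0"] by simp
      also have "ip M (V 0) (V \<tau> - V 0) = ip M (V \<tau>) (V 0) - ip M (V 0) (V 0)"
        using ip_diff_left'[OF L1 L0 L0] ip_sym[of M "V 0" "V \<tau> - V 0"] by simp
      finally have "ip M (V \<tau> - V 0) (V \<tau> - V 0) = ip M (V 0) (V 0)"
        using c V0[OF t] ip_sym[of M "V 0" "V \<tau>"] by (simp add: fun_diff_def)
      thus ?thesis by (simp add: nrm_def)
    qed
    have l1: "((\<lambda>\<tau>. nrm M (V \<tau> - V 0)) \<longlongrightarrow> 0) (at 0 within {0..})" using traj.Vcont[OF tr, of 0] by simp
    have l2: "((\<lambda>\<tau>. nrm M (V \<tau> - V 0)) \<longlongrightarrow> nrm M (V 0)) (at 0 within {0..})"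
    proof (rule tendsto_eventually)
      show "\<forall>\<^sub>F \<tau> in at 0 within {0..}. nrm M (V \<tau> - V 0) = nrm M (V 0)"
        unfolding eventually_at_filter by (rule always_eventually) (auto intro: eq)
    qed
    have nb: "at (0::real) within {0..} \<noteq> bot" by (simp add: at_within_Ici_at_right)
    show ?thesis using tendsto_unique[OF nb l2 l1] .
  qed
  have V0AE: "AE x in M. V 0 x = 0" by (rule nrm_zero_AE[OF VL nV0]) simp
  have vz: "AE x in M. snd z x = 0" using V0AE b0 unfolding V_def by eventually_elim auto
  have dz: "coef M e (V s) i = 0" if s: "0 \<le> s" and i: "i \<in> I" for s i
  proof -
    have "ip M (V s) (V s) = 0"
    proof (cases "s = 0")
      case True thus ?thesis using nV0 ip_self_nonneg[of M "V 0"] by (simp add: nrm_def)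
    next
      case False thus ?thesis using V0 s by simp
    qed
    thus ?thesis using coef_sq_le[OF VL[OF s] i] by simp
  qed
  have eq0: "traj.G M I e lam p k f U V i 0 = 0" if i: "i \<in> I" for i
  proof -
    have d1: "((\<lambda>s. coef M e (V s) i) has_vector_derivative traj.G M I e lam p k f U V i 0) (at 0 within {0..})"
      using traj.dd[OF tr i, of 0] by (simp add: has_real_derivative_iff_has_vector_derivative)
    have "((\<lambda>s. coef M e (V s) i) has_real_derivative 0) (at 0 within {0..})"
      by (rule has_field_derivative_transform_within[OF DERIV_const[of 0], of 1]) (use dz i in auto)
    hence d2: "((\<lambda>s. coef M e (V s) i) has_vector_derivative 0) (at 0 within {0..})"
      by (simp add: has_real_derivative_iff_has_vector_derivative)
    have nb: "at (0::real) within {0..} \<noteq> bot" by (simp add: at_within_Ici_at_right)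
    show ?thesis by (rule vector_derivative_unique_within[OF nb d1 d2])
  qed
  have cU: "coef M e (U 0) i = coef M e (fst z) i" if i: "i \<in> I" for i
    by (rule coef_cong_AE[OF _ UL fzL i]) (use a0 in \<open>auto simp: U_def\<close>)
  have cP: "coef M e (pospart (U 0)) i = coef M e (pospart (fst z)) i" if i: "i \<in> I" for i
  proof (rule coef_cong_AE[OF _ L2_pospart[OF UL] L2_pospart[OF fzL] i])
    show "AE x in M. pospart (U 0) x = pospart (fst z) x" using a0 unfolding U_def pospart_def by eventually_elim auto
  qed simp
  have n1: "nrm_r M I e lam 1 (U 0) = nrm_r M I e lam 1 (fst z)"
    unfolding nrm_r_def coef_def[symmetric] using cU by (auto intro!: arg_cong[where f = sqrt] infsum_cong)
  have "\<forall>i\<in>I. lam i * coef M e (fst z) i - (p - (nrm_r M I e lam 1 (fst z))\<^sup>2) * sqrt (lam i) * coef M e (fst z) i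
                 + k\<^sup>2 * coef M e (pospart (fst z)) i = coef M e f i"
  proof
    fix i assume i: "i \<in> I"
    have "traj.G M I e lam p k f U V i 0 = 0" by (rule eq0[OF i])
    hence "- lam i * coef M e (U 0) i - coef M e (V 0) i + (p - (nrm_r M I e lam 1 (U 0))\<^sup>2) * sqrt (lam i) * coef M e (U 0) i
             - k\<^sup>2 * coef M e (pospart (U 0)) i + coef M e f i = 0"
      using traj.G_def[OF tr] by simp
    thus "lam i * coef M e (fst z) i - (p - (nrm_r M I e lam 1 (fst z))\<^sup>2) * sqrt (lam i) * coef M e (fst z) i
                 + k\<^sup>2 * coef M e (pospart (fst z)) i = coef M e f i"
      using dz[of 0 i] i cU[OF i] cP[OF i] n1 by simp
  qed
  thus ?thesis unfolding stationary_set_def using zH zL vz by (cases z) auto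
qed

end


lemma quad_le2: fixes a r c A :: real
  assumes "0 \<le> a" "a \<le> r * c" "0 \<le> r" "r \<le> 1" "0 \<le> c" "0 \<le> A"
  shows "a\<^sup>2 + 2 * (A * a) \<le> r * (c\<^sup>2 + 2 * A * c)"
proof -
  have "a\<^sup>2 \<le> (r * c)\<^sup>2" using assms by (intro power_mono) auto
  also have "\<dots> = r * (r * c\<^sup>2)" by (simp add: power2_eq_square)
  also have "\<dots> \<le> r * (1 * c\<^sup>2)" using assms by (intro mult_left_mono mult_right_mono) auto
  finally have 1: "a\<^sup>2 \<le> r * c\<^sup>2" by simp
  have "A * a \<le> A * (r * c)" using assms by (intro mult_left_mono) auto
  thus ?thesis using 1 by (simp add: algebra_simps)
qed

lemma abs5: fixes a1 a2 a3 a4 a5 b1 b2 b3 b4 b5 :: real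
  assumes "\<bar>a1\<bar> \<le> b1" "\<bar>a2\<bar> \<le> b2" "\<bar>a3\<bar> \<le> b3" "\<bar>a4\<bar> \<le> b4" "\<bar>a5\<bar> \<le> b5"
  shows "\<bar>a1 + a2 + a3 + a4 - a5\<bar> \<le> b1 + b2 + b3 + b4 + b5"
  using assms unfolding abs_le_iff by linarith

context sset begin

lemma cont_part:
  assumes fL: "f \<in> L2 M" and z: "z \<in> phase M I e lam" and ep: "\<epsilon> > 0"
  shows "\<exists>\<delta>>0. \<forall>z'\<in>phase M I e lam.
            phase_norm M I e lam (fst z' - fst z, snd z' - snd z) < \<delta> \<longrightarrow> \<bar>(lyap M I e lam p k f) z' - (lyap M I e lam p k f) z\<bar> < \<epsilon>"
proof -
  define u where "u = fst z"
  define v where "v = snd z"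
  have uH: "u \<in> Hr M I e lam 2" and vL: "v \<in> L2 M" using z by (auto simp: phase_def u_def v_def mem_Times_iff)
  have uL: "u \<in> L2 M" using Hr2_L2[OF uH] .
  define A where "A = sqrt (Q2 u)"
  define Bv where "Bv = sqrt (ip M v v)"
  define Au where "Au = sqrt (ip M u u)"
  define A1 where "A1 = sqrt (Q1 u)"
  define \<beta> where "\<beta> = \<bar>Q1 u - p\<bar>"
  define Fn where "Fn = sqrt (ip M f f)"
  define \<kappa> where "\<kappa> = 1 / sqrt (sqrt lm)"
  define \<iota> where "\<iota> = 1 / sqrt lm"
  define \<alpha> where "\<alpha> = \<kappa>\<^sup>2 + 2 * A1 * \<kappa>"
  define K where "K = (1 + 2 * A) + (1 + 2 * Bv) + 1/2 * (\<alpha> * (\<alpha> + 2 * \<beta>)) + k\<^sup>2 * (\<iota>\<^sup>2 + 2 * Au * \<iota>) + 2 * (\<iota> * Fn)"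
  have lmp: "lm > 0" using lm(1) .
  have pos: "0 \<le> A" "0 \<le> Bv" "0 \<le> Au" "0 \<le> A1" "0 \<le> \<beta>" "0 \<le> Fn" "0 \<le> \<kappa>" "0 \<le> \<iota>"
    unfolding A_def Bv_def Au_def A1_def \<beta>_def Fn_def \<kappa>_def \<iota>_def using lmp Q2_nonneg Q1_nonneg ip_self_nonneg by auto
  have apos: "0 \<le> \<alpha>" unfolding \<alpha>_def using pos by simp
  have Kpos: "0 \<le> K" unfolding K_def using pos apos by (simp add: add_nonneg_nonneg)
  define \<delta> where "\<delta> = min 1 (\<epsilon> / (K + 1))"
  have dpos: "\<delta> > 0" unfolding \<delta>_def using ep Kpos by simp
  have d1: "\<delta> \<le> 1" unfolding \<delta>_def by simp
  have dK: "\<delta> * K < \<epsilon>"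
  proof -
    have "\<delta> * K \<le> \<epsilon> / (K + 1) * K" unfolding \<delta>_def using Kpos by (intro mult_right_mono) auto
    also have "\<dots> < \<epsilon>" using Kpos ep by (simp add: field_simps)
    finally show ?thesis .
  qed
  show ?thesis
  proof (intro exI[of _ \<delta>] conjI dpos ballI impI)
    fix z' assume z': "z' \<in> phase M I e lam"
      and pn: "phase_norm M I e lam (fst z' - fst z, snd z' - snd z) < \<delta>"
    define u' where "u' = fst z'"
    define v' where "v' = snd z'"
    have u'H: "u' \<in> Hr M I e lam 2" and v'L: "v' \<in> L2 M" using z' by (auto simp: phase_def u'_def v'_def mem_Times_iff)
    have u'L: "u' \<in> L2 M" using Hr2_L2[OF u'H] .
    define x where "x = u' - u"
    define y where "y = v' - v"
    have xH: "x \<in> Hr M I e lam 2" unfolding x_def by (rule Hr2_diff[OF u'H uH])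
    have xL: "x \<in> L2 M" using Hr2_L2[OF xH] .
    have pn': "sqrt (Q2 x + ip M y y) < \<delta>" using pn unfolding phase_norm_eq x_def y_def u_def v_def u'_def v'_def by simp
    have Q2x: "0 \<le> Q2 x" by (rule Q2_nonneg)
    have ipy: "0 \<le> ip M y y" by (rule ip_self_nonneg)
    define a where "a = sqrt (Q2 x)"
    define b where "b = sqrt (ip M y y)"
    have a0: "0 \<le> a" and b0: "0 \<le> b" using Q2x ipy by (auto simp: a_def b_def)
    have "sqrt (Q2 x) \<le> sqrt (Q2 x + ip M y y)" by (rule real_sqrt_le_mono) (use ipy in simp)
    hence ad: "a \<le> \<delta>" unfolding a_def using pn' by linarith
    have "sqrt (ip M y y) \<le> sqrt (Q2 x + ip M y y)" by (rule real_sqrt_le_mono) (use Q2x in simp)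
    hence bd: "b \<le> \<delta>" unfolding b_def using pn' by linarith
    have T1: "\<bar>Q2 u' - Q2 u\<bar> \<le> \<delta> * (1\<^sup>2 + 2 * A * 1)"
    proof -
      have "\<bar>Q2 u' - Q2 u\<bar> \<le> Q2 x + 2 * (sqrt (Q2 u) * sqrt (Q2 x))" unfolding x_def by (rule Q2_diff_bnd[OF uH u'H])
      also have "\<dots> = a\<^sup>2 + 2 * (A * a)" by (simp add: a_def A_def Q2x)
      also have "\<dots> \<le> \<delta> * (1\<^sup>2 + 2 * A * 1)" by (rule quad_le2) (use a0 ad dpos d1 pos in auto)
      finally show ?thesis .
    qed
    have T2: "\<bar>ip M v' v' - ip M v v\<bar> \<le> \<delta> * (1\<^sup>2 + 2 * Bv * 1)"
    proof -
      have "\<bar>ip M v' v' - ip M v v\<bar> \<le> ip M y y + 2 * (sqrt (ip M v v) * sqrt (ip M y y))" unfolding y_def by (rule ip_diff_bnd[OF vL v'L])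
      also have "\<dots> = b\<^sup>2 + 2 * (Bv * b)" by (simp add: b_def Bv_def ipy)
      also have "\<dots> \<le> \<delta> * (1\<^sup>2 + 2 * Bv * 1)" by (rule quad_le2) (use b0 bd dpos d1 pos in auto)
      finally show ?thesis .
    qed
    have sQ1x: "sqrt (Q1 x) \<le> \<delta> * \<kappa>"
    proof -
      have "sqrt (Q1 x) \<le> sqrt (Q2 x / sqrt lm)" using Q1_le[OF xH] by simp
      also have "\<dots> = a * \<kappa>" by (simp add: a_def \<kappa>_def real_sqrt_divide)
      also have "\<dots> \<le> \<delta> * \<kappa>" using ad pos by (intro mult_right_mono) auto
      finally show ?thesis .
    qed
    define D where "D = Q1 u' - Q1 u"
    have Dle: "\<bar>D\<bar> \<le> \<delta> * \<alpha>"
    proof -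
      have "\<bar>D\<bar> \<le> Q1 x + 2 * (sqrt (Q1 u) * sqrt (Q1 x))" unfolding D_def x_def by (rule Q1_diff_bnd[OF uH u'H])
      also have "\<dots> = (sqrt (Q1 x))\<^sup>2 + 2 * (A1 * sqrt (Q1 x))" by (simp add: A1_def Q1_nonneg)
      also have "\<dots> \<le> \<delta> * (\<kappa>\<^sup>2 + 2 * A1 * \<kappa>)" by (rule quad_le2) (use sQ1x dpos d1 pos Q1_nonneg in auto)
      finally show ?thesis by (simp add: \<alpha>_def)
    qed
    have T3: "\<bar>1/2 * (Q1 u' - p)\<^sup>2 - 1/2 * (Q1 u - p)\<^sup>2\<bar> \<le> \<delta> * (1/2 * (\<alpha> * (\<alpha> + 2 * \<beta>)))"
    proof -
      have E: "1/2 * (Q1 u' - p)\<^sup>2 - 1/2 * (Q1 u - p)\<^sup>2 = 1/2 * (D * (D + 2 * (Q1 u - p)))"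
        by (simp add: D_def power2_eq_square algebra_simps)
      have "\<bar>1/2 * (Q1 u' - p)\<^sup>2 - 1/2 * (Q1 u - p)\<^sup>2\<bar> = \<bar>1/2 * (D * (D + 2 * (Q1 u - p)))\<bar>"
        using E by (rule arg_cong)
      also have "\<dots> = 1/2 * (\<bar>D\<bar> * \<bar>D + 2 * (Q1 u - p)\<bar>)" by (simp add: abs_mult)
      also have "\<dots> \<le> 1/2 * ((\<delta> * \<alpha>) * (\<alpha> + 2 * \<beta>))"
      proof -
        have h1: "\<bar>D + 2 * (Q1 u - p)\<bar> \<le> \<bar>D\<bar> + \<bar>2 * (Q1 u - p)\<bar>" by (rule abs_triangle_ineq)
        have h2: "\<bar>2 * (Q1 u - p)\<bar> = 2 * \<beta>" unfolding \<beta>_def by (simp only: abs_mult abs_numeral)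
        have "\<bar>D + 2 * (Q1 u - p)\<bar> \<le> \<bar>D\<bar> + 2 * \<beta>" using h1 h2 by linarith
        also have "\<dots> \<le> \<alpha> + 2 * \<beta>"
        proof -
          have "\<delta> * \<alpha> \<le> 1 * \<alpha>" using d1 apos by (intro mult_right_mono) auto
          thus ?thesis using Dle by simp
        qed
        finally have "\<bar>D + 2 * (Q1 u - p)\<bar> \<le> \<alpha> + 2 * \<beta>" .
        thus ?thesis using Dle by (intro mult_left_mono mult_mono) (auto simp: pos)
      qed
      finally show ?thesis by (simp add: algebra_simps)
    qed
    have sipx: "sqrt (ip M x x) \<le> \<delta> * \<iota>"
    proof -
      have "sqrt (ip M x x) \<le> sqrt (Q2 x / lm)" using ip_le_Q2[OF xH] by simp
      also have "\<dots> = a * \<iota>" by (simp add: a_def \<iota>_def real_sqrt_divide)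
      also have "\<dots> \<le> \<delta> * \<iota>" using ad pos by (intro mult_right_mono) auto
      finally show ?thesis .
    qed
    have T4: "\<bar>k\<^sup>2 * ip M (pospart u') (pospart u') - k\<^sup>2 * ip M (pospart u) (pospart u)\<bar> \<le> \<delta> * (k\<^sup>2 * (\<iota>\<^sup>2 + 2 * Au * \<iota>))"
    proof -
      have "\<bar>ip M (pospart u') (pospart u') - ip M (pospart u) (pospart u)\<bar> \<le> ip M x x + 2 * (sqrt (ip M u u) * sqrt (ip M x x))"
        unfolding x_def by (rule P_diff_bnd[OF uL u'L])
      also have "\<dots> = (sqrt (ip M x x))\<^sup>2 + 2 * (Au * sqrt (ip M x x))" by (simp add: Au_def ip_self_nonneg)
      also have "\<dots> \<le> \<delta> * (\<iota>\<^sup>2 + 2 * Au * \<iota>)" by (rule quad_le2) (use sipx dpos d1 pos ip_self_nonneg in auto)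
      finally have "\<bar>ip M (pospart u') (pospart u') - ip M (pospart u) (pospart u)\<bar> \<le> \<delta> * (\<iota>\<^sup>2 + 2 * Au * \<iota>)" .
      hence "k\<^sup>2 * \<bar>ip M (pospart u') (pospart u') - ip M (pospart u) (pospart u)\<bar> \<le> k\<^sup>2 * (\<delta> * (\<iota>\<^sup>2 + 2 * Au * \<iota>))"
        by (intro mult_left_mono) auto
      moreover have "\<bar>k\<^sup>2 * ip M (pospart u') (pospart u') - k\<^sup>2 * ip M (pospart u) (pospart u)\<bar>
          = k\<^sup>2 * \<bar>ip M (pospart u') (pospart u') - ip M (pospart u) (pospart u)\<bar>"
        by (simp only: right_diff_distrib[symmetric] abs_mult abs_power2)
      ultimately show ?thesis by (simp only: mult.left_commute[of "k\<^sup>2" \<delta>])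
    qed
    have T5: "\<bar>2 * ip M u' f - 2 * ip M u f\<bar> \<le> \<delta> * (2 * (\<iota> * Fn))"
    proof -
      have "ip M u' f - ip M u f = ip M x f" unfolding x_def by (rule ip_diff_left'[OF u'L uL fL, symmetric])
      moreover have "\<bar>ip M x f\<bar> \<le> sqrt (ip M x x) * Fn" using ip_cs[OF xL fL] by (simp add: nrm_def Fn_def)
      moreover have "sqrt (ip M x x) * Fn \<le> (\<delta> * \<iota>) * Fn" using sipx pos by (intro mult_right_mono) auto
      ultimately have "\<bar>ip M u' f - ip M u f\<bar> \<le> \<delta> * (\<iota> * Fn)" by (simp add: mult.assoc)
      moreover have "\<bar>2 * ip M u' f - 2 * ip M u f\<bar> = 2 * \<bar>ip M u' f - ip M u f\<bar>"
        by (simp only: right_diff_distrib[symmetric] abs_mult abs_numeral)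
      ultimately show ?thesis by simp
    qed
    have "\<bar>(lyap M I e lam p k f) z' - (lyap M I e lam p k f) z\<bar> \<le>
        \<delta> * (1\<^sup>2 + 2 * A * 1) + \<delta> * (1\<^sup>2 + 2 * Bv * 1) + \<delta> * (1/2 * (\<alpha> * (\<alpha> + 2 * \<beta>)))
        + \<delta> * (k\<^sup>2 * (\<iota>\<^sup>2 + 2 * Au * \<iota>)) + \<delta> * (2 * (\<iota> * Fn))"
    proof -
      have eq: "(lyap M I e lam p k f) z' - (lyap M I e lam p k f) z =
         (Q2 u' - Q2 u) + (ip M v' v' - ip M v v) + (1/2 * (Q1 u' - p)\<^sup>2 - 1/2 * (Q1 u - p)\<^sup>2)
         + (k\<^sup>2 * ip M (pospart u') (pospart u') - k\<^sup>2 * ip M (pospart u) (pospart u))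
         - (2 * ip M u' f - 2 * ip M u f)"
        unfolding lyap_eq u_def[symmetric] v_def[symmetric] u'_def[symmetric] v'_def[symmetric] by simp
      show ?thesis unfolding eq by (rule abs5[OF T1 T2 T3 T4 T5])
    qed
    also have "\<dots> = \<delta> * K" unfolding K_def by (simp add: algebra_simps)
    also have "\<dots> < \<epsilon>" by (rule dK)
    finally show "\<bar>(lyap M I e lam p k f) z' - (lyap M I e lam p k f) z\<bar> < \<epsilon>" .
  qed
qed

end


context sset begin

lemma coer_lower: assumes fL: "f \<in> L2 M" and z: "z \<in> phase M I e lam"
  shows "(phase_norm M I e lam z)\<^sup>2 - 2 * (sqrt (ip M f f) / sqrt lm) * phase_norm M I e lam z \<le> lyap M I e lam p k f z"
proof -
  define u where "u = fst z"
  define v where "v = snd z"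
  have uH: "u \<in> Hr M I e lam 2" and vL: "v \<in> L2 M" using z by (auto simp: phase_def u_def v_def mem_Times_iff)
  have uL: "u \<in> L2 M" using Hr2_L2[OF uH] .
  define N where "N = phase_norm M I e lam z"
  have NN: "N\<^sup>2 = Q2 u + ip M v v"
  proof -
    have "0 \<le> Q2 u + ip M v v" by (intro add_nonneg_nonneg Q2_nonneg ip_self_nonneg)
    thus ?thesis unfolding N_def phase_norm_eq u_def v_def by simp
  qed
  have N0: "0 \<le> N" unfolding N_def phase_norm_def by simp
  have sQ: "sqrt (Q2 u) \<le> N" unfolding N_def phase_norm_eq u_def v_def
    by (rule real_sqrt_le_mono) (use ip_self_nonneg in simp)
  have "\<bar>ip M u f\<bar> \<le> nrm M u * nrm M f" by (rule ip_cs[OF uL fL])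
  also have "\<dots> \<le> (N / sqrt lm) * nrm M f"
  proof (rule mult_right_mono)
    have "nrm M u \<le> sqrt (Q2 u / lm)" unfolding nrm_def using ip_le_Q2[OF uH] by simp
    also have "\<dots> = sqrt (Q2 u) / sqrt lm" by (simp add: real_sqrt_divide)
    also have "\<dots> \<le> N / sqrt lm" using sQ lm(1) by (simp add: divide_right_mono)
    finally show "nrm M u \<le> N / sqrt lm" .
  qed (simp add: nrm_def ip_self_nonneg)
  finally have b: "\<bar>ip M u f\<bar> \<le> (sqrt (ip M f f) / sqrt lm) * N" by (simp add: nrm_def mult.commute)
  have "0 \<le> 1/2 * (Q1 u - p)\<^sup>2 + k\<^sup>2 * ip M (pospart u) (pospart u)" using ip_self_nonneg[of M "pospart u"] by simp
  hence "N\<^sup>2 - 2 * ((sqrt (ip M f f) / sqrt lm) * N) \<le> lyap M I e lam p k f z"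
    unfolding lyap_eq u_def[symmetric] v_def[symmetric] NN using b by (simp add: abs_le_iff)
  thus ?thesis unfolding N_def by (simp add: mult.assoc)
qed

definition gb where "gb p k c N = N\<^sup>2 + 1/2 * (N\<^sup>2 / sqrt lm + \<bar>p\<bar>)\<^sup>2 + k\<^sup>2 * (N\<^sup>2 / lm) + 2 * c * N"

lemma gb_mono: assumes "0 \<le> N" "N \<le> N'" "0 \<le> c" shows "gb p k c N \<le> gb p k c N'"
proof -
  have 1: "N\<^sup>2 \<le> N'\<^sup>2" using assms by (intro power_mono) auto
  have 2: "N\<^sup>2 / sqrt lm + \<bar>p\<bar> \<le> N'\<^sup>2 / sqrt lm + \<bar>p\<bar>" using 1 lm(1) by (simp add: divide_right_mono)
  have 3: "(N\<^sup>2 / sqrt lm + \<bar>p\<bar>)\<^sup>2 \<le> (N'\<^sup>2 / sqrt lm + \<bar>p\<bar>)\<^sup>2" using 2 lm(1) by (intro power_mono) auto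
  have 4: "k\<^sup>2 * (N\<^sup>2 / lm) \<le> k\<^sup>2 * (N'\<^sup>2 / lm)" using 1 lm(1) by (intro mult_left_mono divide_right_mono) auto
  have 5: "2 * c * N \<le> 2 * c * N'" using assms by (intro mult_left_mono) auto
  show ?thesis unfolding gb_def using 1 3 4 5 by simp
qed

lemma coer_upper: assumes fL: "f \<in> L2 M" and z: "z \<in> phase M I e lam"
  shows "lyap M I e lam p k f z \<le> gb p k (sqrt (ip M f f) / sqrt lm) (phase_norm M I e lam z)"
proof -
  define u where "u = fst z"
  define v where "v = snd z"
  have uH: "u \<in> Hr M I e lam 2" and vL: "v \<in> L2 M" using z by (auto simp: phase_def u_def v_def mem_Times_iff)
  have uL: "u \<in> L2 M" using Hr2_L2[OF uH] .
  define N where "N = phase_norm M I e lam z"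
  have NN: "N\<^sup>2 = Q2 u + ip M v v"
  proof -
    have "0 \<le> Q2 u + ip M v v" by (intro add_nonneg_nonneg Q2_nonneg ip_self_nonneg)
    thus ?thesis unfolding N_def phase_norm_eq u_def v_def by simp
  qed
  have Q2N: "Q2 u \<le> N\<^sup>2" using NN ip_self_nonneg[of M v] by simp
  have sQ: "sqrt (Q2 u) \<le> N" unfolding N_def phase_norm_eq u_def v_def
    by (rule real_sqrt_le_mono) (use ip_self_nonneg in simp)
  have "\<bar>ip M u f\<bar> \<le> nrm M u * nrm M f" by (rule ip_cs[OF uL fL])
  also have "\<dots> \<le> (N / sqrt lm) * nrm M f"
  proof (rule mult_right_mono)
    have "nrm M u \<le> sqrt (Q2 u / lm)" unfolding nrm_def using ip_le_Q2[OF uH] by simp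
    also have "\<dots> = sqrt (Q2 u) / sqrt lm" by (simp add: real_sqrt_divide)
    also have "\<dots> \<le> N / sqrt lm" using sQ lm(1) by (simp add: divide_right_mono)
    finally show "nrm M u \<le> N / sqrt lm" .
  qed (simp add: nrm_def ip_self_nonneg)
  finally have b: "\<bar>ip M u f\<bar> \<le> (sqrt (ip M f f) / sqrt lm) * N" by (simp add: nrm_def mult.commute)
  have q1: "(Q1 u - p)\<^sup>2 \<le> (N\<^sup>2 / sqrt lm + \<bar>p\<bar>)\<^sup>2"
  proof -
    have "Q1 u \<le> N\<^sup>2 / sqrt lm" using Q1_le[OF uH] Q2N lm(1) by (meson divide_right_mono order_trans real_sqrt_ge_zero less_imp_le)
    hence "\<bar>Q1 u - p\<bar> \<le> N\<^sup>2 / sqrt lm + \<bar>p\<bar>" using Q1_nonneg[of u] by linarith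
    hence "\<bar>Q1 u - p\<bar>\<^sup>2 \<le> (N\<^sup>2 / sqrt lm + \<bar>p\<bar>)\<^sup>2" by (intro power_mono) auto
    thus ?thesis by simp
  qed
  have pp: "k\<^sup>2 * ip M (pospart u) (pospart u) \<le> k\<^sup>2 * (N\<^sup>2 / lm)"
  proof (rule mult_left_mono)
    have "ip M (pospart u) (pospart u) \<le> ip M u u" by (rule ip_pos_le[OF uL])
    also have "\<dots> \<le> Q2 u / lm" by (rule ip_le_Q2[OF uH])
    also have "\<dots> \<le> N\<^sup>2 / lm" using Q2N lm(1) by (simp add: divide_right_mono)
    finally show "ip M (pospart u) (pospart u) \<le> N\<^sup>2 / lm" .
  qed simp
  show ?thesis unfolding lyap_eq u_def[symmetric] v_def[symmetric] gb_def N_def[symmetric]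
    using NN q1 pp b by (simp add: abs_le_iff)
qed

lemma coer_part: assumes fL: "f \<in> L2 M"
  shows "\<forall>Z. (\<forall>n. Z n \<in> phase M I e lam) \<longrightarrow>
            (filterlim (\<lambda>n. (lyap M I e lam p k f) (Z n)) at_top sequentially \<longleftrightarrow>
             filterlim (\<lambda>n. phase_norm M I e lam (Z n)) at_top sequentially)"
proof (intro allI impI)
  fix Z :: "nat \<Rightarrow> ('w \<Rightarrow> real) \<times> ('w \<Rightarrow> real)" assume Zp: "\<forall>n. Z n \<in> phase M I e lam"
  define c where "c = sqrt (ip M f f) / sqrt lm"
  have c0: "0 \<le> c" unfolding c_def using ip_self_nonneg[of M f] lm(1) by simp
  have N0: "\<And>n. 0 \<le> phase_norm M I e lam (Z n)" unfolding phase_norm_def by simp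
  show "filterlim (\<lambda>n. (lyap M I e lam p k f) (Z n)) at_top sequentially \<longleftrightarrow>
             filterlim (\<lambda>n. phase_norm M I e lam (Z n)) at_top sequentially"
  proof
    assume L: "filterlim (\<lambda>n. (lyap M I e lam p k f) (Z n)) at_top sequentially"
    show "filterlim (\<lambda>n. phase_norm M I e lam (Z n)) at_top sequentially"
      unfolding filterlim_at_top
    proof
      fix B :: real
      define B0 where "B0 = max B 0"
      have "eventually (\<lambda>n. gb p k c B0 + 1 \<le> (lyap M I e lam p k f) (Z n)) sequentially"
        using L unfolding filterlim_at_top by blast
      thus "eventually (\<lambda>n. B \<le> phase_norm M I e lam (Z n)) sequentially"
      proof (rule eventually_mono)
        fix n assume h: "gb p k c B0 + 1 \<le> (lyap M I e lam p k f) (Z n)"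
        show "B \<le> phase_norm M I e lam (Z n)"
        proof (rule ccontr)
          assume "\<not> B \<le> phase_norm M I e lam (Z n)"
          hence "phase_norm M I e lam (Z n) \<le> B0" unfolding B0_def by simp
          hence "gb p k c (phase_norm M I e lam (Z n)) \<le> gb p k c B0" using gb_mono N0 c0 by blast
          moreover have "(lyap M I e lam p k f) (Z n) \<le> gb p k c (phase_norm M I e lam (Z n))"
            unfolding c_def by (rule coer_upper[OF fL Zp[rule_format]])
          ultimately show False using h by simp
        qed
      qed
    qed
  next
    assume N: "filterlim (\<lambda>n. phase_norm M I e lam (Z n)) at_top sequentially"
    show "filterlim (\<lambda>n. (lyap M I e lam p k f) (Z n)) at_top sequentially"
      unfolding filterlim_at_top
    proof
      fix B :: real
      have "eventually (\<lambda>n. max \<bar>B\<bar> (2 * c + 1) \<le> phase_norm M I e lam (Z n)) sequentially"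
        using N unfolding filterlim_at_top by blast
      thus "eventually (\<lambda>n. B \<le> (lyap M I e lam p k f) (Z n)) sequentially"
      proof (rule eventually_mono)
        fix n assume h: "max \<bar>B\<bar> (2 * c + 1) \<le> phase_norm M I e lam (Z n)"
        define Nn where "Nn = phase_norm M I e lam (Z n)"
        have h1: "\<bar>B\<bar> \<le> Nn" "2 * c + 1 \<le> Nn" using h unfolding Nn_def by auto
        have "Nn * 1 \<le> Nn * (Nn - 2 * c)" using h1 N0[of n] unfolding Nn_def[symmetric] by (intro mult_left_mono) auto
        hence "Nn \<le> Nn\<^sup>2 - 2 * c * Nn" by (simp add: power2_eq_square algebra_simps)
        moreover have "Nn\<^sup>2 - 2 * c * Nn \<le> (lyap M I e lam p k f) (Z n)"
          unfolding Nn_def c_def by (rule coer_lower[OF fL Zp[rule_format]])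
        ultimately show "B \<le> (lyap M I e lam p k f) (Z n)" using h1 by linarith
      qed
    qed
  qed
qed

end

theorem proposition4p3:
  fixes M :: "'w measure" and I :: "nat set" and e :: "nat \<Rightarrow> 'w \<Rightarrow> real"
    and lam :: "nat \<Rightarrow> real" and p k :: real and f :: "'w \<Rightarrow> real"
    and S :: "real \<Rightarrow> ('w \<Rightarrow> real) \<times> ('w \<Rightarrow> real) \<Rightarrow> ('w \<Rightarrow> real) \<times> ('w \<Rightarrow> real)"
  assumes spec: "spectral_setting M I e lam"
    and f: "f \<in> L2 M"
    and S_sol: "\<forall>z\<in>phase M I e lam.
        weak_solution M I e lam p k f (\<lambda>t. fst (S t z)) (\<lambda>t. snd (S t z)) \<and>
        (AE x in M. fst (S 0 z) x = fst z x) \<and> (AE x in M. snd (S 0 z) x = snd z x)"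
  shows "(\<forall>z\<in>phase M I e lam. \<forall>\<epsilon>>0. \<exists>\<delta>>0. \<forall>z'\<in>phase M I e lam.
            phase_norm M I e lam (fst z' - fst z, snd z' - snd z) < \<delta> \<longrightarrow> \<bar>(lyap M I e lam p k f) z' - (lyap M I e lam p k f) z\<bar> < \<epsilon>)
       \<and> (\<forall>Z. (\<forall>n. Z n \<in> phase M I e lam) \<longrightarrow>
            (filterlim (\<lambda>n. (lyap M I e lam p k f) (Z n)) at_top sequentially \<longleftrightarrow>
             filterlim (\<lambda>n. phase_norm M I e lam (Z n)) at_top sequentially))
       \<and> (\<forall>z\<in>phase M I e lam. \<forall>s t. 0 \<le> s \<and> s \<le> t \<longrightarrow> (lyap M I e lam p k f) (S t z) \<le> (lyap M I e lam p k f) (S s z))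
       \<and> (\<forall>z\<in>phase M I e lam. \<forall>t\<ge>0.
            ((\<lambda>s. (lyap M I e lam p k f) (S s z)) has_real_derivative (- 2 * (nrm M (snd (S t z)))\<^sup>2)) (at t within {0..}))
       \<and> (\<forall>z\<in>phase M I e lam. (\<forall>t>0. (lyap M I e lam p k f) (S t z) = (lyap M I e lam p k f) z) \<longrightarrow> z \<in> stationary_set M I e lam p k f)"
proof -
  interpret sset M I e lam using spec by (simp add: sset_def)
  have ws: "\<And>z. z \<in> phase M I e lam \<Longrightarrow> weak_solution M I e lam p k f (\<lambda>t. fst (S t z)) (\<lambda>t. snd (S t z))"
    using S_sol by blast
  show ?thesis
  proof (intro conjI)
    show "\<forall>z\<in>phase M I e lam. \<forall>\<epsilon>>0. \<exists>\<delta>>0. \<forall>z'\<in>phase M I e lam.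
            phase_norm M I e lam (fst z' - fst z, snd z' - snd z) < \<delta> \<longrightarrow> \<bar>(lyap M I e lam p k f) z' - (lyap M I e lam p k f) z\<bar> < \<epsilon>"
      using cont_part[OF f] by blast
    show "\<forall>Z. (\<forall>n. Z n \<in> phase M I e lam) \<longrightarrow>
            (filterlim (\<lambda>n. (lyap M I e lam p k f) (Z n)) at_top sequentially \<longleftrightarrow>
             filterlim (\<lambda>n. phase_norm M I e lam (Z n)) at_top sequentially)"
      by (rule coer_part[OF f])
    show "\<forall>z\<in>phase M I e lam. \<forall>s t. 0 \<le> s \<and> s \<le> t \<longrightarrow> (lyap M I e lam p k f) (S t z) \<le> (lyap M I e lam p k f) (S s z)"
    proof (intro ballI allI impI)
      fix z and s t :: real assume z: "z \<in> phase M I e lam" and st: "0 \<le> s \<and> s \<le> t"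
      show "(lyap M I e lam p k f) (S t z) \<le> (lyap M I e lam p k f) (S s z)"
        using mono_part[where S = S and z = z and f = f and p = p and k = k, OF f ws[OF z]] st by blast
    qed
    show "\<forall>z\<in>phase M I e lam. \<forall>t\<ge>0.
            ((\<lambda>s. (lyap M I e lam p k f) (S s z)) has_real_derivative (- 2 * (nrm M (snd (S t z)))\<^sup>2)) (at t within {0..})"
    proof (intro ballI allI impI)
      fix z t assume z: "z \<in> phase M I e lam" and t: "(0::real) \<le> t"
      show "((\<lambda>s. (lyap M I e lam p k f) (S s z)) has_real_derivative (- 2 * (nrm M (snd (S t z)))\<^sup>2)) (at t within {0..})"
        by (rule deriv_part[where S = S and z = z and f = f and p = p and k = k, OF f ws[OF z] t])
    qed
    show "\<forall>z\<in>phase M I e lam. (\<forall>t>0. (lyap M I e lam p k f) (S t z) = (lyap M I e lam p k f) z) \<longrightarrow> z \<in> stationary_set M I e lam p k f"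
    proof (intro ballI impI)
      fix z assume z: "z \<in> phase M I e lam" and H: "\<forall>t>0. (lyap M I e lam p k f) (S t z) = (lyap M I e lam p k f) z"
      have a0: "AE x in M. fst (S 0 z) x = fst z x" and b0: "AE x in M. snd (S 0 z) x = snd z x"
        using S_sol z by blast+
      show "z \<in> stationary_set M I e lam p k f"
        by (rule stat_part[where S = S and z = z and f = f and p = p and k = k, OF f ws[OF z] z a0 b0 H])
    qed
  qed
qed


end
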